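(* Let $G=G(n_1,n_2,p)$ where $1\ll n_1=\lambda n_2$ for a constant $0<\lambda\leq 1$, and $(n_1n_2)^{-\frac12}\ll p\ll (n_1n_2)^{-\frac12+o(1)}$. Then whp $f(G)=o(pn_1n_2)$.
   Context: $G(n_1,n_2,p)$ is the binomial random bipartite graph: each edge of $K_{n_1,n_2}$ is present independently with probability $p$. $f(G)$ denotes the number of faces of $G$ when embedded on an orientable surface of minimal genus. The notation $f\ll g$ means $f/g\to0$; "whp" means with probability tending to $1$ as $n_1\to\infty$. *)

theory Defs
  imports "HOL-Analysis.Analysis"
begin

text \<open>Bipartite graphs on parts {0..<n1} (left) and {0..<n2} (right):
  a graph is an edge set E \<subseteq> {..<n1} \<times> {..<n2}; the edge (i,j) joins left vertex i
  and right vertex j.\<close>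

definition bip_edges :: "nat \<Rightarrow> nat \<Rightarrow> (nat \<times> nat) set" where
  "bip_edges n1 n2 = {..<n1} \<times> {..<n2}"

text \<open>Darts (directed edges): (e, True) points from the left end to the right end of e,
  (e, False) the other way.\<close>

definition darts :: "(nat \<times> nat) set \<Rightarrow> ((nat \<times> nat) \<times> bool) set" where
  "darts E = E \<times> UNIV"

text \<open>Tail vertex of a dart; vertices are Inl i (left) and Inr j (right).\<close>

fun dart_tail :: "(nat \<times> nat) \<times> bool \<Rightarrow> nat + nat" where
  "dart_tail ((i, j), True) = Inl i"
| "dart_tail ((i, j), False) = Inr j"

fun dart_rev :: "(nat \<times> nat) \<times> bool \<Rightarrow> (nat \<times> nat) \<times> bool" where
  "dart_rev (e, b) = (e, \<not> b)"

text \<open>Rotation system: a permutation of the darts which preserves the tail and acts as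
  a single cycle on the darts at every vertex (a cyclic order around each vertex).\<close>

definition rotation_system :: "(nat \<times> nat) set \<Rightarrow> ((nat \<times> nat) \<times> bool \<Rightarrow> (nat \<times> nat) \<times> bool) \<Rightarrow> bool" where
  "rotation_system E \<sigma> \<longleftrightarrow>
     bij_betw \<sigma> (darts E) (darts E)
   \<and> (\<forall>d \<in> darts E. dart_tail (\<sigma> d) = dart_tail d)
   \<and> (\<forall>d \<in> darts E. \<forall>d' \<in> darts E. dart_tail d = dart_tail d' \<longrightarrow> (\<exists>k. (\<sigma> ^^ k) d = d'))"

definition faces :: "(nat \<times> nat) set \<Rightarrow> ((nat \<times> nat) \<times> bool \<Rightarrow> (nat \<times> nat) \<times> bool)
    \<Rightarrow> ((nat \<times> nat) \<times> bool) set set" where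
  "faces E \<sigma> = (\<lambda>d. {((\<sigma> \<circ> dart_rev) ^^ k) d | k. True}) ` darts E"

text \<open>f(G): number of faces of a minimal-genus orientable
  embedding = maximum number of faces over all rotation systems (Euler's formula).\<close>

definition num_faces_min_genus :: "(nat \<times> nat) set \<Rightarrow> nat" where
  "num_faces_min_genus E = Max {card (faces E \<sigma>) | \<sigma>. rotation_system E \<sigma>}"

definition bip_prob :: "nat \<Rightarrow> nat \<Rightarrow> real \<Rightarrow> ((nat \<times> nat) set \<Rightarrow> bool) \<Rightarrow> real" where
  "bip_prob n1 n2 p P =
     (\<Sum>E \<in> {E. E \<subseteq> bip_edges n1 n2 \<and> P E}.
        p ^ card E * (1 - p) ^ (n1 * n2 - card E))"

end

theory Submission
  imports Defs
begin

definition wt :: "nat \<Rightarrow> nat \<Rightarrow> real \<Rightarrow> (nat\<times>nat) set \<Rightarrow> real" where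
  "wt n1 n2 p E = p ^ card E * (1-p)^(n1*n2 - card E)"

definition bexp :: "nat \<Rightarrow> nat \<Rightarrow> real \<Rightarrow> ((nat\<times>nat) set \<Rightarrow> real) \<Rightarrow> real" where
  "bexp n1 n2 p X = (\<Sum>E\<in>Pow (bip_edges n1 n2). wt n1 n2 p E * X E)"

lemma finite_bip[simp]: "finite (bip_edges n1 n2)" by (simp add: bip_edges_def)
lemma card_bip: "card (bip_edges n1 n2) = n1*n2" by (simp add: bip_edges_def card_cartesian_product)

lemma wt_nonneg: "0 \<le> p \<Longrightarrow> p \<le> 1 \<Longrightarrow> 0 \<le> wt n1 n2 p E"
  by (simp add: wt_def)

lemma prob_pattern:
  assumes ST: "S \<subseteq> bip_edges n1 n2" "T \<subseteq> bip_edges n1 n2" "S \<inter> T = {}"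
  shows "(\<Sum>E\<in>Pow (bip_edges n1 n2). wt n1 n2 p E * (if S \<subseteq> E \<and> E \<inter> T = {} then 1 else 0))
     = p ^ card S * (1-p) ^ card T"
proof -
  let ?B = "bip_edges n1 n2"
  define f where "f e = (if e \<in> T then 0 else p)" for e
  define g where "g e = (if e \<in> S then 0 else 1-p)" for e
  have pa: "(\<Prod>e\<in>?B. f e + g e) = (\<Sum>E\<in>Pow ?B. (\<Prod>e\<in>E. f e) * (\<Prod>e\<in>?B - E. g e))"
    by (rule prod_add) simp
  have fin: "finite ?B" by simp
  have r: "(\<Prod>e\<in>E. f e) * (\<Prod>e\<in>?B - E. g e) = wt n1 n2 p E * (if S \<subseteq> E \<and> E \<inter> T = {} then 1 else 0)"
    if "E \<in> Pow ?B" for E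
  proof -
    have EB: "E \<subseteq> ?B" using that by auto
    have fE: "finite E" using EB fin finite_subset by blast
    have c: "card (?B - E) = n1*n2 - card E" using EB fin by (simp add: card_Diff_subset card_bip fE)
    show ?thesis
    proof (cases "S \<subseteq> E \<and> E \<inter> T = {}")
      case True
      have "(\<Prod>e\<in>E. f e) = (\<Prod>e\<in>E. p)" using True by (intro prod.cong) (auto simp: f_def)
      moreover have "(\<Prod>e\<in>?B - E. g e) = (\<Prod>e\<in>?B-E. 1-p)" using True by (intro prod.cong) (auto simp: g_def)
      ultimately show ?thesis using True c by (simp add: wt_def)
    next
      case False
      then consider e where "e \<in> S" "e \<notin> E" | e where "e \<in> E" "e \<in> T" by blast
      then show ?thesis
      proof cases
        case 1
        then have z: "(\<Prod>e\<in>?B - E. g e) = 0" using ST fin by (intro prod_zero) (auto simp: g_def)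
        show ?thesis using False by (simp only: z mult_zero_right if_False mult_zero_right)
      next
        case 2
        then have z: "(\<Prod>e\<in>E. f e) = 0" using fE by (intro prod_zero) (auto simp: f_def)
        show ?thesis using False by (simp only: z mult_zero_left if_False mult_zero_right)
      qed
    qed
  qed
  have "(\<Prod>e\<in>?B. f e + g e) = (\<Prod>e\<in>S \<union> T. f e + g e)"
    using ST by (intro prod.mono_neutral_right) (auto simp: f_def g_def)
  also have "\<dots> = (\<Prod>e\<in>S. f e + g e) * (\<Prod>e\<in>T. f e + g e)"
    using ST fin by (intro prod.union_disjoint) (auto intro: finite_subset)
  also have "(\<Prod>e\<in>S. f e + g e) = (\<Prod>e\<in>S. p)" using ST by (intro prod.cong) (auto simp: f_def g_def)
  also have "(\<Prod>e\<in>T. f e + g e) = (\<Prod>e\<in>T. 1-p)" using ST by (intro prod.cong) (auto simp: f_def g_def)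
  finally have "(\<Prod>e\<in>?B. f e + g e) = p ^ card S * (1-p) ^ card T" by simp
  moreover have "(\<Sum>E\<in>Pow ?B. (\<Prod>e\<in>E. f e) * (\<Prod>e\<in>?B - E. g e))
     = (\<Sum>E\<in>Pow ?B. wt n1 n2 p E * (if S \<subseteq> E \<and> E \<inter> T = {} then 1 else 0))"
    using r by (rule sum.cong[OF refl])
  ultimately show ?thesis using pa by simp
qed

lemma total_prob: "(\<Sum>E\<in>Pow (bip_edges n1 n2). wt n1 n2 p E) = 1"
  using prob_pattern[of "{}" n1 n2 "{}" p] by simp

lemma bip_prob_bexp: "bip_prob n1 n2 p P = bexp n1 n2 p (\<lambda>E. if P E then 1 else 0)"
proof -
  have "(\<Sum>E\<in>Pow (bip_edges n1 n2). wt n1 n2 p E * (if P E then 1 else 0))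
     = (\<Sum>E\<in>Pow (bip_edges n1 n2). if P E then wt n1 n2 p E else 0)"
    by (intro sum.cong) auto
  also have "\<dots> = sum (wt n1 n2 p) {E \<in> Pow (bip_edges n1 n2). P E}"
    by (rule sum.inter_filter[symmetric]) simp
  also have "{E \<in> Pow (bip_edges n1 n2). P E} = {E. E \<subseteq> bip_edges n1 n2 \<and> P E}" by auto
  finally have "bexp n1 n2 p (\<lambda>E. if P E then 1 else 0) = sum (wt n1 n2 p) {E. E \<subseteq> bip_edges n1 n2 \<and> P E}"
    unfolding bexp_def .
  moreover have "bip_prob n1 n2 p P = sum (wt n1 n2 p) {E. E \<subseteq> bip_edges n1 n2 \<and> P E}"
    unfolding bip_prob_def wt_def ..
  ultimately show ?thesis by simp
qed

lemma bexp_add: "bexp n1 n2 p (\<lambda>E. X E + Y E) = bexp n1 n2 p X + bexp n1 n2 p Y"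
  by (simp add: bexp_def distrib_left sum.distrib)
lemma bexp_cmult: "bexp n1 n2 p (\<lambda>E. c * X E) = c * bexp n1 n2 p X"
  by (simp add: bexp_def sum_distrib_left mult_ac)
lemma bexp_mono: "0 \<le> p \<Longrightarrow> p \<le> 1 \<Longrightarrow> (\<And>E. E \<subseteq> bip_edges n1 n2 \<Longrightarrow> X E \<le> Y E) \<Longrightarrow> bexp n1 n2 p X \<le> bexp n1 n2 p Y"
  unfolding bexp_def by (intro sum_mono mult_left_mono) (auto simp: wt_nonneg)

lemma bexp_count:
  assumes "finite C" "\<And>c. c \<in> C \<Longrightarrow> S c \<subseteq> bip_edges n1 n2 \<and> T c \<subseteq> bip_edges n1 n2 \<and> S c \<inter> T c = {}"
  shows "bexp n1 n2 p (\<lambda>E. real (card {c\<in>C. S c \<subseteq> E \<and> E \<inter> T c = {}}))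
     = (\<Sum>c\<in>C. p ^ card (S c) * (1-p) ^ card (T c))"
proof -
  have "bexp n1 n2 p (\<lambda>E. real (card {c\<in>C. S c \<subseteq> E \<and> E \<inter> T c = {}}))
     = (\<Sum>E\<in>Pow (bip_edges n1 n2). wt n1 n2 p E * (\<Sum>c\<in>C. (if S c \<subseteq> E \<and> E \<inter> T c = {} then 1 else 0)))"
    unfolding bexp_def using assms(1) by (simp add: sum.If_cases Int_def)
  also have "\<dots> = (\<Sum>c\<in>C. \<Sum>E\<in>Pow (bip_edges n1 n2). wt n1 n2 p E * (if S c \<subseteq> E \<and> E \<inter> T c = {} then 1 else 0))"
    by (simp add: sum_distrib_left sum.swap[of _ C])
  also have "\<dots> = (\<Sum>c\<in>C. p ^ card (S c) * (1-p) ^ card (T c))"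
    using assms(2) by (intro sum.cong refl prob_pattern) auto
  finally show ?thesis .
qed

lemma markov:
  assumes p: "0 \<le> p" "p \<le> 1" and X: "\<And>E. 0 \<le> X E" and h: "h > 0"
  shows "bip_prob n1 n2 p (\<lambda>E. h \<le> X E) \<le> bexp n1 n2 p X / h"
proof -
  have "h * bip_prob n1 n2 p (\<lambda>E. h \<le> X E) = bexp n1 n2 p (\<lambda>E. h * (if h \<le> X E then 1 else 0))"
    by (simp add: bip_prob_bexp bexp_cmult)
  also have "\<dots> \<le> bexp n1 n2 p X" using p X by (intro bexp_mono) auto
  finally show ?thesis using h by (simp add: field_simps mult.commute)
qed

lemma prob_compl: "bip_prob n1 n2 p P = 1 - bip_prob n1 n2 p (\<lambda>E. \<not> P E)"
proof -
  have "bip_prob n1 n2 p P + bip_prob n1 n2 p (\<lambda>E. \<not> P E) = bexp n1 n2 p (\<lambda>E. 1)"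
    unfolding bip_prob_bexp bexp_def sum.distrib[symmetric] by (intro sum.cong) auto
  also have "\<dots> = 1" using total_prob by (simp add: bexp_def)
  finally show ?thesis by simp
qed

lemma prob_le1: "0 \<le> p \<Longrightarrow> p \<le> 1 \<Longrightarrow> bip_prob n1 n2 p P \<le> 1"
proof -
  assume "0 \<le> p" "p \<le> 1"
  then have "0 \<le> bip_prob n1 n2 p (\<lambda>E. \<not> P E)" unfolding bip_prob_def
    by (intro sum_nonneg) auto
  then show ?thesis using prob_compl[of n1 n2 p P] by simp
qed

definition dart_head :: "(nat \<times> nat) \<times> bool \<Rightarrow> nat + nat" where
  "dart_head d = dart_tail (dart_rev d)"

definition ed :: "nat + nat \<Rightarrow> nat + nat \<Rightarrow> nat \<times> nat" where
  "ed x y = (case x of Inl i \<Rightarrow> (i, projr y) | Inr j \<Rightarrow> (projl y, j))"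

definition mkdart :: "nat + nat \<Rightarrow> nat + nat \<Rightarrow> (nat \<times> nat) \<times> bool" where
  "mkdart x y = (ed x y, isl x)"

definition cross :: "nat + nat \<Rightarrow> nat + nat \<Rightarrow> bool" where
  "cross x y \<longleftrightarrow> isl x \<noteq> isl y"

definition Vs :: "nat \<Rightarrow> nat \<Rightarrow> (nat + nat) set" where
  "Vs n1 n2 = Inl ` {..<n1} \<union> Inr ` {..<n2}"

lemma dart_eq: "dart_tail e = dart_tail e' \<Longrightarrow> dart_head e = dart_head e' \<Longrightarrow> e = e'"
  by (cases e; cases e'; rename_tac a b a' b'; case_tac a; case_tac a'; case_tac b; case_tac b')
     (auto simp: dart_head_def)

lemma cross_tail_head: "cross (dart_tail e) (dart_head e)"
  by (cases e; rename_tac a b; case_tac a; case_tac b) (auto simp: dart_head_def cross_def)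

lemma ed_tail_head: "ed (dart_tail e) (dart_head e) = fst e"
  by (cases e; rename_tac a b; case_tac a; case_tac b) (auto simp: dart_head_def ed_def)

lemma mkdart_tail_head: "mkdart (dart_tail e) (dart_head e) = e"
  by (cases e; rename_tac a b; case_tac a; case_tac b) (auto simp: dart_head_def ed_def mkdart_def)

lemma rev_rev[simp]: "dart_rev (dart_rev e) = e"
  by (cases e) auto

lemma head_rev: "dart_head (dart_rev e) = dart_tail e"
  by (simp add: dart_head_def)

lemma rev_darts: "e \<in> darts E \<Longrightarrow> dart_rev e \<in> darts E"
  by (cases e) (auto simp: darts_def)

lemma tail_Vs: "fst e \<in> bip_edges n1 n2 \<Longrightarrow> dart_tail e \<in> Vs n1 n2"
  by (cases e; rename_tac a b; case_tac a; case_tac b) (auto simp: Vs_def bip_edges_def)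

lemma finite_darts: "finite E \<Longrightarrow> finite (darts E)"
  by (simp add: darts_def)

lemma card_darts: "finite E \<Longrightarrow> card (darts E) = 2 * card E"
  by (simp add: darts_def card_cartesian_product)

definition orb :: "('a \<Rightarrow> 'a) \<Rightarrow> 'a \<Rightarrow> 'a set" where
  "orb f d = {(f ^^ k) d | k. True}"

lemma funpow_in: "(\<And>x. x \<in> D \<Longrightarrow> f x \<in> D) \<Longrightarrow> d \<in> D \<Longrightarrow> (f ^^ k) d \<in> D"
  by (induction k) auto

lemma orb_sub:
  assumes "\<And>x. x \<in> D \<Longrightarrow> f x \<in> D" "d \<in> D" shows "orb f d \<subseteq> D"
proof
  fix x assume "x \<in> orb f d"
  then obtain k where "x = (f^^k) d" by (auto simp: orb_def)
  then show "x \<in> D" using funpow_in[of D f d k] assms by simp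
qed

lemma funpow_inj:
  assumes "inj_on f D" "\<And>x. x \<in> D \<Longrightarrow> f x \<in> D"
  shows "x \<in> D \<Longrightarrow> y \<in> D \<Longrightarrow> (f ^^ k) x = (f ^^ k) y \<Longrightarrow> x = y"
proof (induction k)
  case 0 then show ?case by simp
next
  case (Suc k)
  have inD: "(f ^^ k) x \<in> D" "(f ^^ k) y \<in> D"
    using funpow_in[of D f x k, OF assms(2) Suc.prems(1)] funpow_in[of D f y k, OF assms(2) Suc.prems(2)]
    by blast+
  have "f ((f ^^ k) x) = f ((f ^^ k) y)" using Suc.prems(3) by simp
  then have "(f ^^ k) x = (f ^^ k) y" using inj_onD[OF assms(1)] inD by blast
  then show ?case using Suc.IH Suc.prems(1,2) by blast
qed

lemma orb_period:
  assumes "inj_on f D" "\<And>x. x \<in> D \<Longrightarrow> f x \<in> D" "finite D" "d \<in> D"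
  shows "\<exists>n. 0 < n \<and> n \<le> card (orb f d) \<and> (f ^^ n) d = d"
proof -
  let ?O = "orb f d"
  have fin: "finite ?O" using orb_sub[of D f d] assms finite_subset by blast
  have "(\<lambda>k. (f ^^ k) d) ` {0..card ?O} \<subseteq> ?O" unfolding orb_def by auto
  then have "card ((\<lambda>k. (f ^^ k) d) ` {0..card ?O}) \<le> card ?O" using fin card_mono by blast
  then have "\<not> inj_on (\<lambda>k. (f ^^ k) d) {0..card ?O}"
  proof -
    assume c: "card ((\<lambda>k. (f ^^ k) d) ` {0..card ?O}) \<le> card ?O"
    show ?thesis
    proof
      assume "inj_on (\<lambda>k. (f ^^ k) d) {0..card ?O}"
      then have "card ((\<lambda>k. (f ^^ k) d) ` {0..card ?O}) = Suc (card ?O)" by (simp add: card_image)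
      then show False using c by simp
    qed
  qed
  then obtain i j where ij: "i \<le> card ?O" "j \<le> card ?O" "i \<noteq> j" "(f ^^ i) d = (f ^^ j) d"
    unfolding inj_on_def by auto
  have key: "(f ^^ (b - a)) d = d \<and> 0 < b - a \<and> b - a \<le> card ?O"
    if "a < b" "b \<le> card ?O" "(f ^^ a) d = (f ^^ b) d" for a b
  proof -
    have "(f ^^ a) ((f ^^ (b - a)) d) = (f ^^ (a + (b - a))) d"
      by (simp only: funpow_add comp_apply)
    also have "a + (b - a) = b" using that by simp
    finally have "(f ^^ a) ((f ^^ (b - a)) d) = (f ^^ a) d" using that by simp
    moreover have "(f ^^ (b - a)) d \<in> D" using funpow_in[of D f d "b-a", OF assms(2) assms(4)] by blast
    ultimately have "(f ^^ (b - a)) d = d" using funpow_inj[OF assms(1,2)] assms(4) by blast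
    then show ?thesis using that by auto
  qed
  show ?thesis
  proof (cases "i < j")
    case True then show ?thesis using key[of i j] ij by blast
  next
    case False then have "j < i" using ij by simp
    then show ?thesis using key[of j i] ij by (intro exI[of _ "i-j"]) auto
  qed
qed

lemma funpow_period_mult: "(f ^^ n) d = d \<Longrightarrow> (f ^^ (c * n)) d = d"
  by (induction c) (auto simp: funpow_add)

lemma orb_eq:
  assumes "inj_on f D" "\<And>x. x \<in> D \<Longrightarrow> f x \<in> D" "finite D" "d \<in> D" "e \<in> orb f d"
  shows "orb f e = orb f d"
proof -
  obtain a where a: "e = (f ^^ a) d" using assms(5) unfolding orb_def by auto
  obtain n where n: "0 < n" "(f ^^ n) d = d" using orb_period[OF assms(1-4)] by auto
  show ?thesis
  proof
    show "orb f e \<subseteq> orb f d"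
    proof
      fix x assume "x \<in> orb f e"
      then obtain b where b: "x = (f ^^ b) e" unfolding orb_def by auto
      have "x = (f ^^ (b + a)) d" unfolding b a by (simp only: funpow_add comp_apply)
      then show "x \<in> orb f d" unfolding orb_def by blast
    qed
    show "orb f d \<subseteq> orb f e"
    proof
      fix x assume "x \<in> orb f d"
      then obtain b where b: "x = (f ^^ b) d" unfolding orb_def by auto
      have an: "a \<le> a * n" using n by simp
      have "(f ^^ (a * n)) d = d" using funpow_period_mult[OF n(2)] by (simp add: mult.commute)
      then have "x = (f ^^ b) ((f ^^ (a * n)) d)" using b by simp
      also have "\<dots> = (f ^^ (b + a * n)) d" by (simp only: funpow_add comp_apply)
      also have "b + a * n = (b + a * n - a) + a" using an by arith
      also have "(f ^^ ((b + a * n - a) + a)) d = (f ^^ (b + a * n - a)) ((f ^^ a) d)"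
        by (simp only: funpow_add comp_apply)
      finally show "x \<in> orb f e" unfolding orb_def a by blast
    qed
  qed
qed

lemma orb_self: "d \<in> orb f d"
proof -
  have "d = (f ^^ 0) d" by simp
  then show ?thesis unfolding orb_def by blast
qed

lemma orb_disjoint:
  assumes "inj_on f D" "\<And>x. x \<in> D \<Longrightarrow> f x \<in> D" "finite D" "d1 \<in> D" "d2 \<in> D"
    "orb f d1 \<noteq> orb f d2"
  shows "orb f d1 \<inter> orb f d2 = {}"
proof (rule ccontr)
  assume "orb f d1 \<inter> orb f d2 \<noteq> {}"
  then obtain x where "x \<in> orb f d1" "x \<in> orb f d2" by auto
  then have "orb f x = orb f d1" "orb f x = orb f d2"
    using orb_eq[OF assms(1-4)] orb_eq[OF assms(1-3) assms(5)] by blast+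
  then show False using assms(6) by simp
qed

lemma card_hit_le:
  assumes "\<And>F G. F \<in> C \<Longrightarrow> G \<in> C \<Longrightarrow> F \<noteq> G \<Longrightarrow> F \<inter> G = {}"
    "\<And>F. F \<in> C \<Longrightarrow> F \<inter> A \<noteq> {}" "finite A"
  shows "card C \<le> card A"
proof -
  define h where "h F = (SOME x. x \<in> F \<inter> A)" for F
  have h: "h F \<in> F \<inter> A" if "F \<in> C" for F
  proof -
    have "\<exists>x. x \<in> F \<inter> A" using assms(2)[OF that] by blast
    then show ?thesis unfolding h_def by (rule someI_ex)
  qed
  have "inj_on h C"
  proof (rule inj_onI)
    fix F G assume FG: "F \<in> C" "G \<in> C" "h F = h G"
    show "F = G"
    proof (rule ccontr)
      assume "F \<noteq> G"
      then have "F \<inter> G = {}" using assms(1) FG(1,2) by blast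
      moreover have "h F \<in> F" "h F \<in> G" using h[OF FG(1)] h[OF FG(2)] FG(3) by auto
      ultimately show False by blast
    qed
  qed
  moreover have "h ` C \<subseteq> A" using h by auto
  ultimately show ?thesis using card_inj_on_le assms(3) by blast
qed

definition cyc_edges :: "(nat + nat) list \<Rightarrow> (nat \<times> nat) set" where
  "cyc_edges u = {ed (u!t) (u!((t+1) mod length u)) | t. t < length u}"

definition cand :: "nat \<Rightarrow> nat \<Rightarrow> nat \<Rightarrow> (nat + nat) list set" where
  "cand n1 n2 L = {u. 3 \<le> length u \<and> length u \<le> L \<and> distinct u \<and> set u \<subseteq> Vs n1 n2
     \<and> (\<forall>t<length u. cross (u!t) (u!((t+1) mod length u)))}"

definition cyccount :: "nat \<Rightarrow> nat \<Rightarrow> nat \<Rightarrow> (nat \<times> nat) set \<Rightarrow> nat" where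
  "cyccount n1 n2 L E = card {u \<in> cand n1 n2 L. cyc_edges u \<subseteq> E}"

definition leafL :: "(nat \<times> nat) set \<Rightarrow> (nat \<times> nat) set" where
  "leafL E = {e \<in> E. \<forall>j'. (fst e, j') \<in> E \<longrightarrow> j' = snd e}"

definition leafR :: "(nat \<times> nat) set \<Rightarrow> (nat \<times> nat) set" where
  "leafR E = {e \<in> E. \<forall>i'. (i', snd e) \<in> E \<longrightarrow> i' = fst e}"

lemma finite_Vs: "finite (Vs n1 n2)" by (simp add: Vs_def)

lemma finite_cand: "finite (cand n1 n2 L)"
proof -
  have "cand n1 n2 L \<subseteq> {u. set u \<subseteq> Vs n1 n2 \<and> length u \<le> L}" unfolding cand_def by auto
  then show ?thesis by (rule finite_subset[OF _ finite_lists_length_le[OF finite_Vs]])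
qed

locale rsys =
  fixes E :: "(nat \<times> nat) set" and \<sigma> :: "(nat \<times> nat) \<times> bool \<Rightarrow> (nat \<times> nat) \<times> bool"
    and n1 n2 :: nat
  assumes EB: "E \<subseteq> bip_edges n1 n2" and rs: "rotation_system E \<sigma>"
begin

abbreviation "D \<equiv> darts E"
abbreviation "\<tau> \<equiv> \<sigma> \<circ> dart_rev"

lemma finE: "finite E" by (rule finite_subset[OF EB finite_bip])
lemma finD: "finite D" by (rule finite_darts[OF finE])

lemma sig_bij: "bij_betw \<sigma> D D" using rs unfolding rotation_system_def by (rule conjunct1)
lemma sig_in: "x \<in> D \<Longrightarrow> \<sigma> x \<in> D" by (rule bij_betw_apply[OF sig_bij])
lemma sig_tail_all: "\<forall>d\<in>D. dart_tail (\<sigma> d) = dart_tail d"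
  using rs unfolding rotation_system_def by (elim conjE)
lemma sig_tail: "x \<in> D \<Longrightarrow> dart_tail (\<sigma> x) = dart_tail x" using sig_tail_all by simp
lemma sig_trans: "\<forall>d\<in>D. \<forall>d'\<in>D. dart_tail d = dart_tail d' \<longrightarrow> (\<exists>k. (\<sigma> ^^ k) d = d')"
  using rs unfolding rotation_system_def by (elim conjE)

lemma tau_in: "x \<in> D \<Longrightarrow> \<tau> x \<in> D" using sig_in rev_darts by simp

lemma tau_inj: "inj_on \<tau> D"
proof (rule inj_onI)
  fix x y assume "x \<in> D" "y \<in> D" "\<tau> x = \<tau> y"
  then have "\<sigma> (dart_rev x) = \<sigma> (dart_rev y)" by simp
  moreover have "dart_rev x \<in> D" "dart_rev y \<in> D" using \<open>x \<in> D\<close> \<open>y \<in> D\<close> rev_darts by auto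
  ultimately have "dart_rev x = dart_rev y" using inj_onD[OF bij_betw_imp_inj_on[OF sig_bij]] by blast
  then show "x = y" by (metis rev_rev)
qed

lemma tail_tau: "x \<in> D \<Longrightarrow> dart_tail (\<tau> x) = dart_head x"
  using sig_tail[OF rev_darts] by (simp add: dart_head_def)

lemma fixed_leaf:
  assumes "x \<in> D" "\<sigma> x = x" "y \<in> D" "dart_tail y = dart_tail x"
  shows "y = x"
proof -
  have "dart_tail x = dart_tail y" using assms(4) by simp
  then obtain k where "(\<sigma> ^^ k) x = y" using sig_trans assms(1,3) by blast
  moreover have "(\<sigma> ^^ k) x = x" for k using assms(2) by (induction k) auto
  ultimately show ?thesis by simp
qed

definition "Db = {e \<in> D. \<sigma> (dart_rev e) = dart_rev e}"

lemma Db_sub: "Db \<subseteq> leafL E \<times> {False} \<union> leafR E \<times> {True}"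
proof
  fix e assume e: "e \<in> Db"
  obtain i j b where eq: "e = ((i,j),b)" by (cases e) auto
  have eD: "e \<in> D" and fx: "\<sigma> (dart_rev e) = dart_rev e" using e by (auto simp: Db_def)
  have ij: "(i,j) \<in> E" using eD eq by (simp add: darts_def)
  show "e \<in> leafL E \<times> {False} \<union> leafR E \<times> {True}"
  proof (cases b)
    case True
    have r: "dart_rev e = ((i,j),False)" using eq True by simp
    have "i' = i" if "(i',j) \<in> E" for i'
    proof -
      have yD: "((i',j),False) \<in> D" using that by (simp add: darts_def)
      have "((i',j),False) = dart_rev e"
        by (rule fixed_leaf[OF rev_darts[OF eD] fx yD]) (simp add: r)
      then show ?thesis using r by simp
    qed
    then have all: "\<forall>i'. (i', snd (i,j)) \<in> E \<longrightarrow> i' = fst (i,j)" by simp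
    have "(i,j) \<in> leafR E" unfolding leafR_def using ij all by (intro CollectI conjI)
    then show ?thesis using eq True by simp
  next
    case False
    have r: "dart_rev e = ((i,j),True)" using eq False by simp
    have "j' = j" if "(i,j') \<in> E" for j'
    proof -
      have yD: "((i,j'),True) \<in> D" using that by (simp add: darts_def)
      have "((i,j'),True) = dart_rev e"
        by (rule fixed_leaf[OF rev_darts[OF eD] fx yD]) (simp add: r)
      then show ?thesis using r by simp
    qed
    then have all: "\<forall>j'. (fst (i,j), j') \<in> E \<longrightarrow> j' = snd (i,j)" by simp
    have "(i,j) \<in> leafL E" unfolding leafL_def using ij all by (intro CollectI conjI)
    then show ?thesis using eq False by simp
  qed
qed

lemma card_Db: "card Db \<le> card (leafL E) + card (leafR E)"
proof -
  have f1: "finite (leafL E)" "finite (leafR E)" using finE by (auto simp: leafL_def leafR_def)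
  have "card Db \<le> card (leafL E \<times> {False} \<union> leafR E \<times> {True})"
    using Db_sub f1 by (intro card_mono) auto
  also have "\<dots> \<le> card (leafL E \<times> {False}) + card (leafR E \<times> {True})" by (rule card_Un_le)
  also have "\<dots> = card (leafL E) + card (leafR E)" by (simp add: card_cartesian_product)
  finally show ?thesis .
qed

end

context rsys begin

lemma short_face:
  assumes d: "d \<in> D" and nb: "orb \<tau> d \<inter> Db = {}" and sh: "card (orb \<tau> d) \<le> L"
  shows "orb \<tau> d \<inter> (\<lambda>u. mkdart (u!0) (u!1)) ` {u \<in> cand n1 n2 L. cyc_edges u \<subseteq> E} \<noteq> {}"
proof -
  let ?F = "orb \<tau> d"
  obtain n where n: "0 < n" "n \<le> card ?F" "(\<tau> ^^ n) d = d"
    using orb_period[OF tau_inj _ finD d] tau_in by blast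
  define v where "v k = dart_tail ((\<tau> ^^ k) d)" for k
  have inD: "(\<tau> ^^ k) d \<in> D" for k using funpow_in[of D \<tau> d k] tau_in d by blast
  have inF: "(\<tau> ^^ k) d \<in> ?F" for k unfolding orb_def by blast
  have vS: "v (Suc k) = dart_head ((\<tau> ^^ k) d)" for k
  proof -
    have "v (Suc k) = dart_tail (\<tau> ((\<tau> ^^ k) d))" unfolding v_def by simp
    also have "\<dots> = dart_head ((\<tau> ^^ k) d)" by (rule tail_tau[OF inD])
    finally show ?thesis .
  qed
  have vper: "v (k + n) = v k" for k
  proof -
    have "(\<tau> ^^ (k + n)) d = (\<tau> ^^ k) ((\<tau> ^^ n) d)" by (simp only: funpow_add comp_apply)
    then show ?thesis unfolding v_def using n(3) by simp
  qed
  have vcross: "cross (v k) (v (Suc k))" for k using vS cross_tail_head v_def by simp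
  have vne1: "v (Suc k) \<noteq> v k" for k using vcross[of k] by (auto simp: cross_def)
  have vne2: "v (Suc (Suc k)) \<noteq> v k" for k
  proof
    assume eq: "v (Suc (Suc k)) = v k"
    define e0 where "e0 = (\<tau> ^^ k) d"
    define e1 where "e1 = (\<tau> ^^ Suc k) d"
    have e1: "e1 = \<sigma> (dart_rev e0)" unfolding e0_def e1_def by simp
    have "e0 \<notin> Db" using nb inF e0_def by blast
    then have ne: "\<sigma> (dart_rev e0) \<noteq> dart_rev e0" using inD e0_def by (simp add: Db_def)
    have "dart_tail e1 = dart_tail (dart_rev e0)"
      using vS[of k] unfolding v_def e0_def e1_def dart_head_def by simp
    moreover have "dart_head e1 = dart_head (dart_rev e0)"
      using eq vS[of "Suc k"] unfolding v_def e0_def e1_def by (simp add: head_rev)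
    ultimately have "e1 = dart_rev e0" by (rule dart_eq)
    then show False using ne e1 by simp
  qed
  define P where "P g \<longleftrightarrow> 0 < g \<and> (\<exists>i. v i = v (i + g))" for g
  have Pn: "P n" unfolding P_def using n(1) vper[of 0] by (intro conjI exI[of _ 0]) simp_all
  define m where "m = (LEAST g. P g)"
  have Pm: "P m" using Pn LeastI m_def by metis
  have mn: "m \<le> n" using Pn Least_le m_def by metis
  obtain i where i: "v i = v (i + m)" using Pm P_def by auto
  have m3: "3 \<le> m"
  proof -
    have "m \<noteq> 1" using i vne1[of i] by auto
    moreover have "m \<noteq> 2" using i vne2[of i] by (auto simp: numeral_2_eq_2)
    moreover have "0 < m" using Pm P_def by auto
    ultimately show ?thesis by linarith
  qed
  have dist: "v a \<noteq> v b" if "a < b" "b - a < m" for a b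
  proof
    assume "v a = v b"
    then have "P (b - a)" using that unfolding P_def by (auto intro!: exI[of _ a])
    then have "m \<le> b - a" using Least_le m_def by metis
    then show False using that by simp
  qed
  define u where "u = map (\<lambda>t. v (i + t)) [0..<m]"
  have lu: "length u = m" by (simp add: u_def)
  have un: "u!t = v (i+t)" if "t < m" for t using that by (simp add: u_def)
  have unext: "u!((t+1) mod m) = v (Suc (i + t))" if "t < m" for t
  proof (cases "t + 1 < m")
    case True then show ?thesis using un by simp
  next
    case False then have "t + 1 = m" using that by simp
    then have z: "(t+1) mod m = 0" by simp
    have "u!((t+1) mod m) = v i" using z un[of 0] m3 by simp
    also have "v i = v (i+m)" by (rule i)
    also have "i + m = Suc (i+t)" using \<open>t + 1 = m\<close> by simp
    finally show ?thesis .
  qed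
  have du: "distinct u"
    unfolding distinct_conv_nth lu
  proof (intro allI impI)
    fix a b assume ab: "a < m" "b < m" "a \<noteq> b"
    show "u ! a \<noteq> u ! b"
    proof (cases "a < b")
      case True
      have "v (i+a) \<noteq> v (i+b)" by (rule dist) (use True ab in auto)
      then show ?thesis using un ab by simp
    next
      case False
      have "v (i+b) \<noteq> v (i+a)" by (rule dist) (use False ab in auto)
      then show ?thesis using un ab by auto
    qed
  qed
  have edge: "ed (u!t) (u!((t+1) mod length u)) = fst ((\<tau> ^^ (i+t)) d)" if "t < m" for t
    using that un unext lu vS ed_tail_head v_def by simp
  have crs: "cross (u!t) (u!((t+1) mod length u))" if "t < m" for t
    using that un unext lu vcross by simp
  have fstE: "fst ((\<tau> ^^ k) d) \<in> E" for k using inD[of k] by (auto simp: darts_def)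
  have setu: "set u \<subseteq> Vs n1 n2"
  proof
    fix x assume "x \<in> set u"
    then obtain t where "t < m" "x = u!t" using lu by (auto simp: in_set_conv_nth)
    then have "x = dart_tail ((\<tau> ^^ (i+t)) d)" using un v_def by simp
    then show "x \<in> Vs n1 n2" using tail_Vs fstE EB by blast
  qed
  have mL: "m \<le> L" using mn n(2) sh by simp
  have uc: "u \<in> cand n1 n2 L" unfolding cand_def using m3 mL du setu crs lu by auto
  have ue: "cyc_edges u \<subseteq> E" unfolding cyc_edges_def using edge fstE lu by auto
  have "mkdart (u!0) (u!1) = (\<tau> ^^ i) d"
    using un[of 0] un[of 1] m3 vS[of i] v_def mkdart_tail_head by simp
  then have "(\<tau> ^^ i) d \<in> (\<lambda>u. mkdart (u!0) (u!1)) ` {u \<in> cand n1 n2 L. cyc_edges u \<subseteq> E}"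
    using uc ue by (metis (mono_tags, lifting) image_eqI mem_Collect_eq)
  then show ?thesis using inF by blast
qed

end

context rsys begin

lemma faces_orb: "faces E \<sigma> = orb \<tau> ` D"
  unfolding faces_def orb_def by (rule refl)

lemma faces_disj: "F \<in> faces E \<sigma> \<Longrightarrow> G \<in> faces E \<sigma> \<Longrightarrow> F \<noteq> G \<Longrightarrow> F \<inter> G = {}"
  unfolding faces_orb using orb_disjoint[OF tau_inj tau_in finD] by blast

lemma face_sub: "F \<in> faces E \<sigma> \<Longrightarrow> F \<subseteq> D"
  unfolding faces_orb using orb_sub[of D \<tau>] tau_in by blast

lemma faces_bound:
  assumes L: "1 \<le> L"
  shows "real (card (faces E \<sigma>)) \<le> real (card (leafL E)) + real (card (leafR E))
           + real (cyccount n1 n2 L E) + 2 * real (card E) / real L"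
proof -
  let ?F = "faces E \<sigma>"
  let ?A = "(\<lambda>u. mkdart (u!0) (u!1)) ` {u \<in> cand n1 n2 L. cyc_edges u \<subseteq> E}"
  define FB where "FB = {F\<in>?F. F \<inter> Db \<noteq> {}}"
  define FL where "FL = {F\<in>?F. F \<inter> Db = {} \<and> L < card F}"
  define FS where "FS = {F\<in>?F. F \<inter> Db = {} \<and> card F \<le> L}"
  have finF: "finite ?F" unfolding faces_orb using finD by simp
  have U: "?F = FB \<union> FL \<union> FS" unfolding FB_def FL_def FS_def by auto
  have finDb: "finite Db" using finD unfolding Db_def by simp
  have c1: "card FB \<le> card Db"
  proof (rule card_hit_le)
    show "F \<inter> G = {}" if "F \<in> FB" "G \<in> FB" "F \<noteq> G" for F G
      using faces_disj that unfolding FB_def by blast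
    show "F \<inter> Db \<noteq> {}" if "F \<in> FB" for F using that unfolding FB_def by blast
  qed (rule finDb)
  have finA: "finite ?A" using finite_cand by simp
  have c3: "card FS \<le> card ?A"
  proof (rule card_hit_le)
    show "F \<inter> ?A \<noteq> {}" if "F \<in> FS" for F
    proof -
      from that obtain d where d: "d \<in> D" "F = orb \<tau> d" unfolding FS_def faces_orb by auto
      show ?thesis using short_face[OF d(1), of L] that d(2) unfolding FS_def by auto
    qed
    show "F \<inter> G = {}" if "F \<in> FS" "G \<in> FS" "F \<noteq> G" for F G
      using faces_disj that unfolding FS_def by blast
  qed (rule finA)
  have cA: "card ?A \<le> cyccount n1 n2 L E" unfolding cyccount_def by (rule card_image_le) (simp add: finite_cand)
  have c2: "card FL * L \<le> 2 * card E"
  proof -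
    have finFL: "finite FL" using finF unfolding FL_def by simp
    have "card FL * L = (\<Sum>F\<in>FL. L)" by simp
    also have "\<dots> \<le> (\<Sum>F\<in>FL. card F)" by (rule sum_mono) (auto simp: FL_def)
    also have "\<dots> = card (\<Union>FL)"
    proof (rule card_Union_disjoint[symmetric])
      show "pairwise disjnt FL" unfolding pairwise_def disjnt_def FL_def using faces_disj by blast
      show "finite A" if "A \<in> FL" for A
        using that face_sub finD finite_subset unfolding FL_def by blast
    qed
    also have "\<dots> \<le> card D"
      by (rule card_mono[OF finD]) (use face_sub in \<open>auto simp: FL_def\<close>)
    also have "\<dots> = 2 * card E" by (rule card_darts[OF finE])
    finally show ?thesis .
  qed
  have "card ?F \<le> card FB + card FL + card FS"
    unfolding U by (meson card_Un_le add_le_mono le_trans order_refl)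
  then have "real (card ?F) \<le> real (card FB) + real (card FL) + real (card FS)" by linarith
  moreover have "real (card FB) \<le> real (card (leafL E)) + real (card (leafR E))"
    using c1 card_Db by linarith
  moreover have "real (card FS) \<le> real (cyccount n1 n2 L E)" using c3 cA by linarith
  moreover have "real (card FL) \<le> 2 * real (card E) / real L"
  proof -
    have "real (card FL) * real L \<le> 2 * real (card E)" using c2
      by (metis of_nat_le_iff of_nat_mult of_nat_numeral)
    then show ?thesis using L by (simp add: field_simps)
  qed
  ultimately show ?thesis by linarith
qed

end

definition nxt :: "nat set \<Rightarrow> nat \<Rightarrow> nat" where
  "nxt S j = (if \<exists>j'\<in>S. j < j' then Min {j'\<in>S. j < j'} else Min S)"

lemma nxt_in:
  assumes "finite S" "j \<in> S" shows "nxt S j \<in> S"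
proof (cases "\<exists>j'\<in>S. j < j'")
  case True
  then have "Min {j'\<in>S. j < j'} \<in> {j'\<in>S. j < j'}" using assms(1) by (intro Min_in) auto
  then show ?thesis using True by (simp add: nxt_def)
next
  case False
  have "Min S \<in> S" using assms by (intro Min_in) auto
  then show ?thesis using False by (simp add: nxt_def)
qed

lemma nxt_funpow_in: "finite S \<Longrightarrow> j \<in> S \<Longrightarrow> (nxt S ^^ k) j \<in> S"
  by (induction k) (auto simp: nxt_in)

lemma nxt_reach_min:
  assumes "finite S" "j \<in> S" shows "\<exists>k. (nxt S ^^ k) j = Min S"
  using assms(2)
proof (induction "Max S - j" arbitrary: j rule: less_induct)
  case less
  show ?case
  proof (cases "\<exists>j'\<in>S. j < j'")
    case True
    let ?j1 = "nxt S j"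
    have m: "Min {j'\<in>S. j < j'} \<in> {j'\<in>S. j < j'}" using True assms(1) by (intro Min_in) auto
    have j1: "?j1 \<in> {j'\<in>S. j < j'}" using True m by (simp add: nxt_def)
    have "?j1 \<le> Max S" using j1 assms(1) by simp
    moreover have "j < ?j1" using j1 by simp
    ultimately have "Max S - ?j1 < Max S - j" by linarith
    then obtain k where k: "(nxt S ^^ k) ?j1 = Min S" using less.hyps j1 by blast
    have "(nxt S ^^ (Suc k)) j = (nxt S ^^ k) ?j1" by (simp only: funpow_Suc_right comp_apply)
    then show ?thesis using k by metis
  next
    case False
    then have "(nxt S ^^ 1) j = Min S" by (simp add: nxt_def)
    then show ?thesis by blast
  qed
qed

lemma min_reach:
  assumes "finite S" "j' \<in> S" shows "\<exists>k. (nxt S ^^ k) (Min S) = j'"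
  using assms(2)
proof (induction j' rule: less_induct)
  case (less j')
  show ?case
  proof (cases "j' = Min S")
    case True
    then have "(nxt S ^^ 0) (Min S) = j'" by simp
    then show ?thesis by blast
  next
    case False
    have "Min S \<le> j'" using assms(1) less.prems by simp
    then have lt: "Min S < j'" using False by simp
    have Sne: "S \<noteq> {}" using less.prems by auto
    define a where "a = Max {x\<in>S. x < j'}"
    have ne: "{x\<in>S. x < j'} \<noteq> {}" using lt Min_in[OF assms(1) Sne] by auto
    have fin: "finite {x\<in>S. x < j'}" using assms(1) by simp
    have a: "a \<in> {x\<in>S. x < j'}" unfolding a_def using fin ne by (rule Max_in)
    have amax: "x \<le> a" if "x \<in> S" "x < j'" for x unfolding a_def using fin that by simp
    obtain k where k: "(nxt S ^^ k) (Min S) = a" using less.IH a by blast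
    have ex: "\<exists>j''\<in>S. a < j''" using a less.prems by auto
    have "Min {x\<in>S. a < x} = j'"
    proof (rule Min_eqI)
      show "finite {x\<in>S. a < x}" using assms(1) by simp
      show "j' \<in> {x\<in>S. a < x}" using a less.prems by simp
      show "j' \<le> y" if "y \<in> {x\<in>S. a < x}" for y
      proof (rule ccontr)
        assume "\<not> j' \<le> y"
        then have "y \<le> a" using amax that by simp
        then show False using that by simp
      qed
    qed
    then have "nxt S a = j'" using ex by (simp add: nxt_def)
    then have "(nxt S ^^ Suc k) (Min S) = j'" using k by simp
    then show ?thesis by blast
  qed
qed

lemma nxt_reach:
  assumes "finite S" "j \<in> S" "j' \<in> S" shows "\<exists>k. (nxt S ^^ k) j = j'"
proof -
  obtain k1 where k1: "(nxt S ^^ k1) j = Min S" using nxt_reach_min assms by blast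
  obtain k2 where k2: "(nxt S ^^ k2) (Min S) = j'" using min_reach assms by blast
  have "(nxt S ^^ (k2 + k1)) j = (nxt S ^^ k2) ((nxt S ^^ k1) j)" by (simp only: funpow_add comp_apply)
  then show ?thesis using k1 k2 by metis
qed

lemma nxt_surj:
  assumes "finite S" "j' \<in> S" shows "\<exists>j\<in>S. nxt S j = j'"
proof -
  have x: "nxt S j' \<in> S" using nxt_in assms by blast
  obtain k where k: "(nxt S ^^ k) (nxt S j') = j'" using nxt_reach[OF assms(1) x assms(2)] by blast
  show ?thesis
  proof (cases k)
    case 0 then show ?thesis using k assms(2) by auto
  next
    case (Suc k')
    have "(nxt S ^^ k') (nxt S j') \<in> S" using nxt_funpow_in[OF assms(1) x] by blast
    moreover have "nxt S ((nxt S ^^ k') (nxt S j')) = j'" using k Suc by simp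
    ultimately show ?thesis by blast
  qed
qed

definition NL :: "(nat \<times> nat) set \<Rightarrow> nat \<Rightarrow> nat set" where "NL E i = {j. (i,j) \<in> E}"
definition NR :: "(nat \<times> nat) set \<Rightarrow> nat \<Rightarrow> nat set" where "NR E j = {i. (i,j) \<in> E}"

lemma finite_NL: "finite E \<Longrightarrow> finite (NL E i)"
proof -
  assume "finite E"
  moreover have "NL E i \<subseteq> snd ` E" unfolding NL_def by force
  ultimately show ?thesis using finite_subset by blast
qed

lemma finite_NR: "finite E \<Longrightarrow> finite (NR E j)"
proof -
  assume "finite E"
  moreover have "NR E j \<subseteq> fst ` E" unfolding NR_def by force
  ultimately show ?thesis using finite_subset by blast
qed

fun rot :: "(nat \<times> nat) set \<Rightarrow> (nat \<times> nat) \<times> bool \<Rightarrow> (nat \<times> nat) \<times> bool" where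
  "rot E ((i,j),True) = ((i, nxt (NL E i) j), True)"
| "rot E ((i,j),False) = ((nxt (NR E j) i, j), False)"

lemma rot_pow_T: "(rot E ^^ k) ((i,j),True) = ((i, (nxt (NL E i) ^^ k) j), True)"
  by (induction k) auto

lemma rot_pow_F: "(rot E ^^ k) ((i,j),False) = (((nxt (NR E j) ^^ k) i, j), False)"
  by (induction k) auto

lemma rot_rs:
  assumes fin: "finite E" shows "rotation_system E (rot E)"
proof -
  let ?D = "darts E"
  have inD: "rot E d \<in> ?D" if "d \<in> ?D" for d
  proof -
    obtain i j b where d: "d = ((i,j),b)" by (cases d) auto
    have ij: "(i,j) \<in> E" using that d by (simp add: darts_def)
    show ?thesis
    proof (cases b)
      case True
      have "j \<in> NL E i" using ij by (simp add: NL_def)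
      then have "nxt (NL E i) j \<in> NL E i" using nxt_in finite_NL[OF fin] by blast
      then show ?thesis using d True by (simp add: NL_def darts_def)
    next
      case False
      have "i \<in> NR E j" using ij by (simp add: NR_def)
      then have "nxt (NR E j) i \<in> NR E j" using nxt_in finite_NR[OF fin] by blast
      then show ?thesis using d False by (simp add: NR_def darts_def)
    qed
  qed
  have surj: "x \<in> rot E ` ?D" if "x \<in> ?D" for x
  proof -
    obtain i j b where x: "x = ((i,j),b)" by (cases x) auto
    have ij: "(i,j) \<in> E" using that x by (simp add: darts_def)
    show ?thesis
    proof (cases b)
      case True
      have "j \<in> NL E i" using ij by (simp add: NL_def)
      then obtain j0 where j0: "j0 \<in> NL E i" "nxt (NL E i) j0 = j" using nxt_surj finite_NL[OF fin] by blast
      have "((i,j0),True) \<in> ?D" using j0(1) by (simp add: NL_def darts_def)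
      moreover have "rot E ((i,j0),True) = x" using j0(2) x True by simp
      ultimately show ?thesis by (metis image_eqI)
    next
      case False
      have "i \<in> NR E j" using ij by (simp add: NR_def)
      then obtain i0 where i0: "i0 \<in> NR E j" "nxt (NR E j) i0 = i" using nxt_surj finite_NR[OF fin] by blast
      have "((i0,j),False) \<in> ?D" using i0(1) by (simp add: NR_def darts_def)
      moreover have "rot E ((i0,j),False) = x" using i0(2) x False by simp
      ultimately show ?thesis by (metis image_eqI)
    qed
  qed
  have img: "rot E ` ?D = ?D" using inD surj by blast
  have "inj_on (rot E) ?D" by (rule eq_card_imp_inj_on[OF finite_darts[OF fin]]) (simp add: img)
  then have bij: "bij_betw (rot E) ?D ?D" using img unfolding bij_betw_def by simp
  have tl: "dart_tail (rot E d) = dart_tail d" for d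
  proof -
    obtain i j b where d: "d = ((i,j),b)" by (cases d) auto
    show ?thesis using d by (cases b) auto
  qed
  have tr: "\<exists>k. (rot E ^^ k) d = d'" if "d \<in> ?D" "d' \<in> ?D" "dart_tail d = dart_tail d'" for d d'
  proof -
    obtain i j b where d: "d = ((i,j),b)" by (cases d) auto
    obtain i' j' b' where d': "d' = ((i',j'),b')" by (cases d') auto
    have ij: "(i,j) \<in> E" "(i',j') \<in> E" using that d d' by (auto simp: darts_def)
    show ?thesis
    proof (cases b)
      case True
      then have b': "b' = True" "i' = i" using that(3) d d' by (cases b'; auto)+
      have "j \<in> NL E i" "j' \<in> NL E i" using ij b' by (auto simp: NL_def)
      then obtain k where "(nxt (NL E i) ^^ k) j = j'" using nxt_reach finite_NL[OF fin] by blast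
      then have "(rot E ^^ k) d = d'" using d d' True b' by (simp add: rot_pow_T)
      then show ?thesis by blast
    next
      case False
      then have b': "b' = False" "j' = j" using that(3) d d' by (cases b'; auto)+
      have "i \<in> NR E j" "i' \<in> NR E j" using ij b' by (auto simp: NR_def)
      then obtain k where "(nxt (NR E j) ^^ k) i = i'" using nxt_reach finite_NR[OF fin] by blast
      then have "(rot E ^^ k) d = d'" using d d' False b' by (simp add: rot_pow_F)
      then show ?thesis by blast
    qed
  qed
  show ?thesis unfolding rotation_system_def using bij tl tr by blast
qed

lemma num_faces_bound:
  assumes EB: "E \<subseteq> bip_edges n1 n2" and L: "1 \<le> L"
  shows "real (num_faces_min_genus E) \<le> real (card (leafL E)) + real (card (leafR E))
           + real (cyccount n1 n2 L E) + 2 * real (card E) / real L"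
proof -
  have fin: "finite E" by (rule finite_subset[OF EB finite_bip])
  let ?R = "{card (faces E \<sigma>) | \<sigma>. rotation_system E \<sigma>}"
  have ne: "?R \<noteq> {}" using rot_rs[OF fin] by blast
  have "?R \<subseteq> {..card (darts E)}"
  proof
    fix x assume "x \<in> ?R"
    then obtain \<sigma> where x: "x = card (faces E \<sigma>)" by blast
    have "card (faces E \<sigma>) \<le> card (darts E)" unfolding faces_def
      by (rule card_image_le[OF finite_darts[OF fin]])
    then show "x \<in> {..card (darts E)}" using x by simp
  qed
  then have finR: "finite ?R" using finite_subset by blast
  have "Max ?R \<in> ?R" using finR ne by (rule Max_in)
  then obtain \<sigma> where \<sigma>: "rotation_system E \<sigma>" "num_faces_min_genus E = card (faces E \<sigma>)"
    unfolding num_faces_min_genus_def by blast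
  interpret rsys E \<sigma> n1 n2 using EB \<sigma>(1) by unfold_locales
  show ?thesis using faces_bound[OF L] \<sigma>(2) by simp
qed

definition Yv :: "nat \<Rightarrow> nat \<Rightarrow> nat \<Rightarrow> (nat \<times> nat) set \<Rightarrow> real" where
  "Yv n1 n2 L E = real (card (leafL E)) + real (card (leafR E))
           + real (cyccount n1 n2 L E) + 2 * real (card E) / real L"

lemma Yv_nonneg: "0 \<le> Yv n1 n2 L E" by (simp add: Yv_def)

lemma ed_inj:
  fixes x y x' y' :: "nat + nat"
  shows "cross x y \<Longrightarrow> cross x' y' \<Longrightarrow> ed x y = ed x' y' \<Longrightarrow> (x = x' \<and> y = y') \<or> (x = y' \<and> y = x')"
  unfolding cross_def ed_def
  by (cases x; cases y; cases x'; cases y'; simp)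

lemma mod_cyc_contra:
  assumes m3: "3 \<le> (m::nat)" and tm: "t < m" and sm: "s < m"
    and A: "t = (s+1) mod m" and B: "s = (t+1) mod m"
  shows False
proof (cases "s + 1 < m")
  case True
  have e1: "(s+1) mod m = s+1" using True by (rule mod_less)
  have t: "t = s + 1" using A e1 by (rule trans)
  show False
  proof (cases "t + 1 < m")
    case True
    have e2: "(t+1) mod m = t+1" using True by (rule mod_less)
    have "s = t + 1" using B e2 by (rule trans)
    then show False using t by linarith
  next
    case False then have tm1: "t + 1 = m" using tm by linarith
    have e2: "(t+1) mod m = 0" unfolding tm1 by simp
    have "s = 0" using B e2 by (rule trans)
    then show False using t tm1 m3 by linarith
  qed
next
  case False
  then have sm1: "s + 1 = m" using sm by linarith
  have e1: "(s+1) mod m = 0" unfolding sm1 by simp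
  have t: "t = 0" using A e1 by (rule trans)
  have e2: "(t+1) mod m = 1" unfolding t using m3 by simp
  have "s = 1" using B e2 by (rule trans)
  then show False using sm1 m3 by linarith
qed

lemma card_cyc_edges:
  assumes "u \<in> cand n1 n2 L" shows "card (cyc_edges u) = length u"
proof -
  let ?m = "length u"
  have m3: "3 \<le> ?m" and du: "distinct u" and cr: "\<And>t. t < ?m \<Longrightarrow> cross (u!t) (u!((t+1) mod ?m))"
    using assms unfolding cand_def by auto
  have ce: "cyc_edges u = (\<lambda>t. ed (u!t) (u!((t+1) mod ?m))) ` {..<?m}"
    unfolding cyc_edges_def by auto
  have "inj_on (\<lambda>t. ed (u!t) (u!((t+1) mod ?m))) {..<?m}"
  proof (rule inj_onI)
    fix t s assume ts: "t \<in> {..<?m}" "s \<in> {..<?m}" "ed (u!t) (u!((t+1) mod ?m)) = ed (u!s) (u!((s+1) mod ?m))"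
    have m0: "0 < ?m" using m3 by linarith
    have tm: "t < ?m" "s < ?m" "(t+1) mod ?m < ?m" "(s+1) mod ?m < ?m"
      using ts mod_less_divisor[OF m0] by auto
    from ed_inj[OF cr[OF tm(1)] cr[OF tm(2)] ts(3)]
    show "t = s"
    proof
      assume "u!t = u!s \<and> u!((t+1) mod ?m) = u!((s+1) mod ?m)"
      then show "t = s" using du tm by (simp add: nth_eq_iff_index_eq)
    next
      assume a: "u!t = u!((s+1) mod ?m) \<and> u!((t+1) mod ?m) = u!s"
      have e1: "t = (s+1) mod ?m" using nth_eq_iff_index_eq[OF du tm(1) tm(4)] a by blast
      have e2: "(t+1) mod ?m = s" using nth_eq_iff_index_eq[OF du tm(3) tm(2)] a by blast
      show "t = s" using mod_cyc_contra[OF m3 tm(1,2) e1 e2[symmetric]] by blast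
    qed
  qed
  then show ?thesis unfolding ce by (simp add: card_image)
qed

lemma ed_in_bip:
  assumes "cross x y" "x \<in> Vs n1 n2" "y \<in> Vs n1 n2"
  shows "ed x y \<in> bip_edges n1 n2"
  using assms unfolding cross_def ed_def Vs_def bip_edges_def
  by (cases x; cases y; auto)

lemma cyc_edges_bip:
  assumes "u \<in> cand n1 n2 L" shows "cyc_edges u \<subseteq> bip_edges n1 n2"
proof
  fix e assume "e \<in> cyc_edges u"
  then obtain t where t: "t < length u" "e = ed (u!t) (u!((t+1) mod length u))"
    unfolding cyc_edges_def by blast
  have l: "0 < length u" using t(1) by linarith
  have cr: "cross (u!t) (u!((t+1) mod length u))" using assms t unfolding cand_def by blast
  have sV: "set u \<subseteq> Vs n1 n2" using assms unfolding cand_def by blast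
  have a1: "u!t \<in> set u" using t(1) by (rule nth_mem)
  have "(t+1) mod length u < length u" using l by (rule mod_less_divisor)
  then have a2: "u!((t+1) mod length u) \<in> set u" by (rule nth_mem)
  have "u!t \<in> Vs n1 n2" "u!((t+1) mod length u) \<in> Vs n1 n2" using sV a1 a2 by blast+
  then show "e \<in> bip_edges n1 n2" using t ed_in_bip cr by simp
qed

lemma card_Vs: "card (Vs n1 n2) = n1 + n2"
proof -
  have "card (Inl ` {..<n1} \<union> Inr ` {..<n2} :: (nat + nat) set) = card (Inl ` {..<n1} :: (nat + nat) set) + card (Inr ` {..<n2} :: (nat + nat) set)"
    by (rule card_Un_disjoint) auto
  also have "\<dots> = n1 + n2" by (simp add: card_image)
  finally show ?thesis unfolding Vs_def .
qed

lemma bexp_cong: "(\<And>E. E \<subseteq> bip_edges n1 n2 \<Longrightarrow> X E = Y E) \<Longrightarrow> bexp n1 n2 p X = bexp n1 n2 p Y"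
  unfolding bexp_def by (intro sum.cong refl) auto

lemma exp_card: "bexp n1 n2 p (\<lambda>E. real (card E)) = real (n1*n2) * p"
proof -
  have "bexp n1 n2 p (\<lambda>E. real (card E))
      = bexp n1 n2 p (\<lambda>E. real (card {c \<in> bip_edges n1 n2. {c} \<subseteq> E \<and> E \<inter> {} = {}}))"
  proof (rule bexp_cong)
    fix E assume "E \<subseteq> bip_edges n1 n2"
    then have "{c \<in> bip_edges n1 n2. {c} \<subseteq> E \<and> E \<inter> {} = {}} = E" by auto
    then show "real (card E) = real (card {c \<in> bip_edges n1 n2. {c} \<subseteq> E \<and> E \<inter> {} = {}})" by simp
  qed
  also have "\<dots> = (\<Sum>c\<in>bip_edges n1 n2. p ^ card {c} * (1-p) ^ card ({} :: (nat\<times>nat) set))"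
    by (rule bexp_count) auto
  also have "\<dots> = real (n1*n2) * p" by (simp add: card_bip)
  finally show ?thesis .
qed

definition TL :: "nat \<Rightarrow> nat \<times> nat \<Rightarrow> (nat \<times> nat) set" where
  "TL n2 c = (\<lambda>j'. (fst c, j')) ` ({..<n2} - {snd c})"
definition TR :: "nat \<Rightarrow> nat \<times> nat \<Rightarrow> (nat \<times> nat) set" where
  "TR n1 c = (\<lambda>i'. (i', snd c)) ` ({..<n1} - {fst c})"

lemma card_TL: "c \<in> bip_edges n1 n2 \<Longrightarrow> card (TL n2 c) = n2 - 1"
  unfolding TL_def by (subst card_image) (auto simp: inj_on_def bip_edges_def)
lemma card_TR: "c \<in> bip_edges n1 n2 \<Longrightarrow> card (TR n1 c) = n1 - 1"
  unfolding TR_def by (subst card_image) (auto simp: inj_on_def bip_edges_def)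

lemma TL_sub: "c \<in> bip_edges n1 n2 \<Longrightarrow> TL n2 c \<subseteq> bip_edges n1 n2 \<and> {c} \<inter> TL n2 c = {}"
  unfolding TL_def bip_edges_def by (cases c) auto
lemma TR_sub: "c \<in> bip_edges n1 n2 \<Longrightarrow> TR n1 c \<subseteq> bip_edges n1 n2 \<and> {c} \<inter> TR n1 c = {}"
  unfolding TR_def bip_edges_def by (cases c) auto

lemma leafL_eq:
  assumes EB: "E \<subseteq> bip_edges n1 n2"
  shows "leafL E = {c \<in> bip_edges n1 n2. {c} \<subseteq> E \<and> E \<inter> TL n2 c = {}}"
proof (intro equalityI subsetI)
  fix c assume c: "c \<in> leafL E"
  obtain i j where cij: "c = (i,j)" by (cases c) auto
  have cE: "c \<in> E" and lf: "\<forall>j'. (i, j') \<in> E \<longrightarrow> j' = j" using c cij by (auto simp: leafL_def)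
  have "E \<inter> TL n2 c = {}"
  proof (rule ccontr)
    assume "E \<inter> TL n2 c \<noteq> {}"
    then obtain j' where "(i,j') \<in> E" "j' \<noteq> j" unfolding TL_def cij by auto
    then show False using lf by blast
  qed
  then show "c \<in> {c \<in> bip_edges n1 n2. {c} \<subseteq> E \<and> E \<inter> TL n2 c = {}}" using cE EB by auto
next
  fix c assume c: "c \<in> {c \<in> bip_edges n1 n2. {c} \<subseteq> E \<and> E \<inter> TL n2 c = {}}"
  obtain i j where cij: "c = (i,j)" by (cases c) auto
  have cE: "c \<in> E" and dis: "E \<inter> TL n2 c = {}" using c by auto
  have "j' = j" if "(i,j') \<in> E" for j'
  proof (rule ccontr)
    assume ne: "j' \<noteq> j"
    have "j' < n2" using that EB by (auto simp: bip_edges_def)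
    then have "(i,j') \<in> TL n2 c" using ne unfolding TL_def cij by auto
    then show False using dis that by blast
  qed
  then have all: "\<forall>j'. (fst c, j') \<in> E \<longrightarrow> j' = snd c" unfolding cij by simp
  show "c \<in> leafL E" unfolding leafL_def using cE all by (intro CollectI conjI)
qed

lemma leafR_eq:
  assumes EB: "E \<subseteq> bip_edges n1 n2"
  shows "leafR E = {c \<in> bip_edges n1 n2. {c} \<subseteq> E \<and> E \<inter> TR n1 c = {}}"
proof (intro equalityI subsetI)
  fix c assume c: "c \<in> leafR E"
  obtain i j where cij: "c = (i,j)" by (cases c) auto
  have cE: "c \<in> E" and lf: "\<forall>i'. (i', j) \<in> E \<longrightarrow> i' = i" using c cij by (auto simp: leafR_def)
  have "E \<inter> TR n1 c = {}"
  proof (rule ccontr)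
    assume "E \<inter> TR n1 c \<noteq> {}"
    then obtain i' where "(i',j) \<in> E" "i' \<noteq> i" unfolding TR_def cij by auto
    then show False using lf by blast
  qed
  then show "c \<in> {c \<in> bip_edges n1 n2. {c} \<subseteq> E \<and> E \<inter> TR n1 c = {}}" using cE EB by auto
next
  fix c assume c: "c \<in> {c \<in> bip_edges n1 n2. {c} \<subseteq> E \<and> E \<inter> TR n1 c = {}}"
  obtain i j where cij: "c = (i,j)" by (cases c) auto
  have cE: "c \<in> E" and dis: "E \<inter> TR n1 c = {}" using c by auto
  have "i' = i" if "(i',j) \<in> E" for i'
  proof (rule ccontr)
    assume ne: "i' \<noteq> i"
    have "i' < n1" using that EB by (auto simp: bip_edges_def)
    then have "(i',j) \<in> TR n1 c" using ne unfolding TR_def cij by auto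
    then show False using dis that by blast
  qed
  then have all: "\<forall>i'. (i', snd c) \<in> E \<longrightarrow> i' = fst c" unfolding cij by simp
  show "c \<in> leafR E" unfolding leafR_def using cE all by (intro CollectI conjI)
qed

lemma exp_leafL: "bexp n1 n2 p (\<lambda>E. real (card (leafL E))) = real (n1*n2) * (p * (1-p)^(n2-1))"
proof -
  have "bexp n1 n2 p (\<lambda>E. real (card (leafL E)))
      = bexp n1 n2 p (\<lambda>E. real (card {c \<in> bip_edges n1 n2. {c} \<subseteq> E \<and> E \<inter> TL n2 c = {}}))"
    by (rule bexp_cong) (simp add: leafL_eq)
  also have "\<dots> = (\<Sum>c\<in>bip_edges n1 n2. p ^ card {c} * (1-p) ^ card (TL n2 c))"
    by (rule bexp_count) (auto dest: TL_sub)
  also have "\<dots> = (\<Sum>c\<in>bip_edges n1 n2. p * (1-p) ^ (n2 - 1))"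
    by (intro sum.cong refl) (simp add: card_TL)
  also have "\<dots> = real (n1*n2) * (p * (1-p)^(n2-1))" by (simp add: card_bip)
  finally show ?thesis .
qed

lemma exp_leafR: "bexp n1 n2 p (\<lambda>E. real (card (leafR E))) = real (n1*n2) * (p * (1-p)^(n1-1))"
proof -
  have "bexp n1 n2 p (\<lambda>E. real (card (leafR E)))
      = bexp n1 n2 p (\<lambda>E. real (card {c \<in> bip_edges n1 n2. {c} \<subseteq> E \<and> E \<inter> TR n1 c = {}}))"
    by (rule bexp_cong) (simp add: leafR_eq)
  also have "\<dots> = (\<Sum>c\<in>bip_edges n1 n2. p ^ card {c} * (1-p) ^ card (TR n1 c))"
    by (rule bexp_count) (auto dest: TR_sub)
  also have "\<dots> = (\<Sum>c\<in>bip_edges n1 n2. p * (1-p) ^ (n1 - 1))"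
    by (intro sum.cong refl) (simp add: card_TR)
  also have "\<dots> = real (n1*n2) * (p * (1-p)^(n1-1))" by (simp add: card_bip)
  finally show ?thesis .
qed

lemma exp_cyc:
  assumes p: "0 \<le> p" "p \<le> 1"
  shows "bexp n1 n2 p (\<lambda>E. real (cyccount n1 n2 L E)) \<le> (\<Sum>m\<in>{3..L}. (real (n1+n2) * p) ^ m)"
proof -
  let ?C = "cand n1 n2 L"
  have "bexp n1 n2 p (\<lambda>E. real (cyccount n1 n2 L E))
      = bexp n1 n2 p (\<lambda>E. real (card {u \<in> ?C. cyc_edges u \<subseteq> E \<and> E \<inter> {} = {}}))"
    unfolding cyccount_def by simp
  also have "\<dots> = (\<Sum>u\<in>?C. p ^ card (cyc_edges u) * (1-p) ^ card ({} :: (nat\<times>nat) set))"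
    by (rule bexp_count) (auto simp: finite_cand dest: cyc_edges_bip)
  also have "\<dots> = (\<Sum>u\<in>?C. p ^ length u)"
    by (intro sum.cong refl) (simp add: card_cyc_edges)
  also have "\<dots> \<le> (\<Sum>u\<in>(\<Union>m\<in>{3..L}. {u. set u \<subseteq> Vs n1 n2 \<and> length u = m}). p ^ length u)"
  proof (rule sum_mono2)
    show "finite (\<Union>m\<in>{3..L}. {u. set u \<subseteq> Vs n1 n2 \<and> length u = m})"
      using finite_lists_length_eq[OF finite_Vs] by blast
    show "?C \<subseteq> (\<Union>m\<in>{3..L}. {u. set u \<subseteq> Vs n1 n2 \<and> length u = m})"
      unfolding cand_def by auto
  qed (use p in simp)
  also have "\<dots> = (\<Sum>m\<in>{3..L}. \<Sum>u\<in>{u. set u \<subseteq> Vs n1 n2 \<and> length u = m}. p ^ length u)"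
    by (rule sum.UNION_disjoint) (auto simp: finite_lists_length_eq[OF finite_Vs])
  also have "\<dots> = (\<Sum>m\<in>{3..L}. (real (n1+n2) * p) ^ m)"
  proof (intro sum.cong refl)
    fix m
    have "(\<Sum>u\<in>{u. set u \<subseteq> Vs n1 n2 \<and> length u = m}. p ^ length u)
        = (\<Sum>u\<in>{u. set u \<subseteq> Vs n1 n2 \<and> length u = m}. p ^ m)" by (intro sum.cong) auto
    also have "\<dots> = real (card {u. set u \<subseteq> Vs n1 n2 \<and> length u = m}) * p ^ m" by simp
    also have "\<dots> = (real (n1+n2) * p) ^ m"
      by (simp add: card_lists_length_eq[OF finite_Vs] card_Vs power_mult_distrib)
    finally show "(\<Sum>u\<in>{u. set u \<subseteq> Vs n1 n2 \<and> length u = m}. p ^ length u) = (real (n1+n2) * p) ^ m" .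
  qed
  finally show ?thesis .
qed

lemma exp_Y:
  assumes p: "0 \<le> p" "p \<le> 1" and L: "1 \<le> L"
  shows "bexp n1 n2 p (Yv n1 n2 L) \<le> real (n1*n2) * (p * (1-p)^(n2-1)) + real (n1*n2) * (p * (1-p)^(n1-1))
     + (\<Sum>m\<in>{3..L}. (real (n1+n2) * p) ^ m) + 2 * (real (n1*n2) * p) / real L"
proof -
  have "bexp n1 n2 p (Yv n1 n2 L) = bexp n1 n2 p (\<lambda>E. real (card (leafL E))) + bexp n1 n2 p (\<lambda>E. real (card (leafR E)))
     + bexp n1 n2 p (\<lambda>E. real (cyccount n1 n2 L E)) + (2 / real L) * bexp n1 n2 p (\<lambda>E. real (card E))"
    unfolding Yv_def bexp_add[symmetric] bexp_cmult[symmetric] by (simp add: field_simps)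
  then show ?thesis using exp_cyc[OF p, of n1 n2 L] by (simp add: exp_leafL exp_leafR exp_card)
qed

lemma exp_neg_to0:
  fixes x :: "nat \<Rightarrow> real"
  assumes "filterlim x at_top sequentially"
  shows "(\<lambda>k. exp (- x k)) \<longlonglongrightarrow> 0"
proof -
  have "filterlim (\<lambda>k. - x k) at_bot sequentially"
    using assms filterlim_uminus_at_top by blast
  from filterlim_compose[OF exp_at_bot this] show ?thesis .
qed

lemma pow_le_exp:
  fixes p :: real assumes "0 \<le> p" "p \<le> 1"
  shows "(1-p)^n \<le> exp (- (p * real n))"
proof -
  have "1 - p \<le> exp (- p)" using exp_ge_add_one_self[of "-p"] by simp
  then have "(1-p)^n \<le> exp (-p)^n" using assms by (intro power_mono) auto
  also have "\<dots> = exp (real n * (-p))" by (rule exp_of_nat_mult[symmetric])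
  finally show ?thesis by (simp add: mult.commute)
qed

lemma nat_minus1: "real n - 1 \<le> real (n - 1)"
  by (cases n) auto

lemma leaf_term_to0:
  fixes p :: "nat \<Rightarrow> real" and a b :: "nat \<Rightarrow> nat"
  assumes p: "\<And>k. 0 \<le> p k \<and> p k \<le> 1" and ab: "\<And>k. a k \<le> b k"
    and top: "filterlim (\<lambda>k. p k * real (a k)) at_top sequentially"
  shows "(\<lambda>k. (1 - p k) ^ (b k - 1)) \<longlonglongrightarrow> 0"
proof (rule tendsto_sandwich[where f="\<lambda>k. 0" and h="\<lambda>k. exp (- ((-1) + p k * real (a k)))"])
  show "\<forall>\<^sub>F k in sequentially. 0 \<le> (1 - p k) ^ (b k - 1)"
    using p by (intro always_eventually allI zero_le_power) auto
  show "\<forall>\<^sub>F k in sequentially. (1 - p k) ^ (b k - 1) \<le> exp (- ((-1) + p k * real (a k)))"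
  proof (intro always_eventually allI)
    fix k
    have p0: "0 \<le> p k" "p k \<le> 1" using p by auto
    have "(1 - p k) ^ (b k - 1) \<le> (1 - p k) ^ (a k - 1)"
      using p0 ab[of k] by (intro power_decreasing) auto
    also have "\<dots> \<le> exp (- (p k * real (a k - 1)))" by (rule pow_le_exp[OF p0])
    also have "\<dots> \<le> exp (- ((-1) + p k * real (a k)))"
    proof -
      have "p k * (real (a k) - 1) \<le> p k * real (a k - 1)"
        using nat_minus1[of "a k"] p0 by (intro mult_left_mono) auto
      moreover have "(-1) + p k * real (a k) \<le> p k * (real (a k) - 1)" using p0 by (simp add: algebra_simps)
      ultimately show ?thesis by simp
    qed
    finally show "(1 - p k) ^ (b k - 1) \<le> exp (- ((-1) + p k * real (a k)))" .
  qed
  show "(\<lambda>k. 0) \<longlonglongrightarrow> (0::real)" by simp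
  have "filterlim (\<lambda>k. (-1) + p k * real (a k)) at_top sequentially"
    by (rule filterlim_tendsto_add_at_top[OF tendsto_const top])
  then show "(\<lambda>k. exp (- ((-1) + p k * real (a k)))) \<longlonglongrightarrow> 0" by (rule exp_neg_to0)
qed

lemma power_ratio_to0:
  fixes N q :: "nat \<Rightarrow> real"
  assumes Ntop: "filterlim N at_top sequentially"
    and Q: "\<And>\<delta>. \<delta> > 0 \<Longrightarrow> eventually (\<lambda>k. q k \<le> N k powr \<delta>) sequentially"
    and q0: "eventually (\<lambda>k. 0 \<le> q k) sequentially"
  shows "(\<lambda>k. q k ^ j / sqrt (N k)) \<longlonglongrightarrow> 0"
proof (rule tendsto_sandwich[where f="\<lambda>k. 0" and h="\<lambda>k. N k powr (-1/4)"])
  define \<delta> where "\<delta> = 1 / (4 * (real j + 1))"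
  have d0: "\<delta> > 0" unfolding \<delta>_def by simp
  have dj: "real j * \<delta> \<le> 1/4" unfolding \<delta>_def by (simp add: field_simps)
  have N1: "eventually (\<lambda>k. 1 \<le> N k) sequentially" using Ntop by (simp add: filterlim_at_top)
  show "\<forall>\<^sub>F k in sequentially. 0 \<le> q k ^ j / sqrt (N k)"
    using q0 N1 by eventually_elim auto
  show "\<forall>\<^sub>F k in sequentially. q k ^ j / sqrt (N k) \<le> N k powr (-1/4)"
    using q0 N1 Q[OF d0]
  proof eventually_elim
    case (elim k)
    have Npos: "0 < N k" using elim by simp
    have "q k ^ j \<le> (N k powr \<delta>) ^ j" using elim by (intro power_mono) auto
    also have "\<dots> = N k powr (real j * \<delta>)" using Npos by (simp add: powr_power)
    also have "\<dots> \<le> N k powr (1/4)" using dj elim by (intro powr_mono) auto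
    finally have a: "q k ^ j \<le> N k powr (1/4)" .
    have s: "sqrt (N k) = N k powr (1/2)" using Npos by (simp add: powr_half_sqrt)
    have "q k ^ j / sqrt (N k) \<le> N k powr (1/4) / N k powr (1/2)"
      unfolding s using a Npos by (intro divide_right_mono) auto
    also have "\<dots> = N k powr (1/4 - 1/2)" by (rule powr_diff[symmetric])
    also have "\<dots> = N k powr (-1/4)" by simp
    finally show ?case .
  qed
  show "(\<lambda>k. 0) \<longlonglongrightarrow> (0::real)" by simp
  show "(\<lambda>k. N k powr (-1/4)) \<longlonglongrightarrow> 0" by (rule tendsto_neg_powr[OF _ Ntop]) simp
qed

lemma diagonal:
  fixes F :: "nat \<Rightarrow> nat \<Rightarrow> real"
  assumes nn: "\<And>L k. 0 \<le> F L k"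
    and ev: "\<And>L. 3 \<le> L \<Longrightarrow> eventually (\<lambda>k. F L k \<le> 3 / real L) sequentially"
  shows "\<exists>Lk. (\<forall>k. 3 \<le> Lk k) \<and> (\<lambda>k. F (Lk k) k) \<longlonglongrightarrow> 0"
proof -
  have ex: "\<forall>k. \<exists>L. L \<in> {3..k+3} \<and> (\<forall>L'\<in>{3..k+3}. F L k \<le> F L' k)"
  proof
    fix k
    let ?S = "(\<lambda>L. F L k) ` {3..k+3}"
    have "Min ?S \<in> ?S" by (rule Min_in) auto
    then obtain L where L: "L \<in> {3..k+3}" "F L k = Min ?S" by (metis imageE)
    have "\<forall>L'\<in>{3..k+3}. F L k \<le> F L' k" using L(2) by simp
    then show "\<exists>L. L \<in> {3..k+3} \<and> (\<forall>L'\<in>{3..k+3}. F L k \<le> F L' k)" using L(1) by blast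
  qed
  have "\<exists>Lk. \<forall>k. Lk k \<in> {3..k+3} \<and> (\<forall>L'\<in>{3..k+3}. F (Lk k) k \<le> F L' k)"
    using ex by (rule choice)
  then obtain Lk where Lk: "\<And>k. Lk k \<in> {3..k+3}" "\<And>k L'. L' \<in> {3..k+3} \<Longrightarrow> F (Lk k) k \<le> F L' k"
    by blast
  have "(\<lambda>k. F (Lk k) k) \<longlonglongrightarrow> 0"
  proof (rule order_tendstoI)
    fix a :: real assume "a < 0"
    then show "\<forall>\<^sub>F k in sequentially. a < F (Lk k) k" using nn by (intro always_eventually allI) (meson le_less_trans not_le)
  next
    fix a :: real assume a: "0 < a"
    define L0 where "L0 = nat \<lceil>3 / a\<rceil> + 3"
    have L03: "3 \<le> L0" unfolding L0_def by simp
    have "3 / a \<le> real (nat \<lceil>3 / a\<rceil>)" by linarith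
    then have "3 / a < real L0" unfolding L0_def by simp
    then have "3 / real L0 < a" using a L03 by (simp add: field_simps)
    note lt = this
    have "eventually (\<lambda>k. F L0 k \<le> 3 / real L0 \<and> L0 \<le> k) sequentially"
      using ev[OF L03] eventually_ge_at_top[of L0] by (rule eventually_conj)
    then show "\<forall>\<^sub>F k in sequentially. F (Lk k) k < a"
    proof (rule eventually_mono)
      fix k assume h: "F L0 k \<le> 3 / real L0 \<and> L0 \<le> k"
      then have h1: "F L0 k \<le> 3 / real L0" and h2: "L0 \<le> k" by auto
      have "L0 \<in> {3..k+3}" using L03 h2 by simp
      then have "F (Lk k) k \<le> F L0 k" by (rule Lk(2))
      then show "F (Lk k) k < a" using h1 lt by linarith
    qed
  qed
  moreover have "\<forall>k. 3 \<le> Lk k" using Lk(1) by simp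
  ultimately show ?thesis by blast
qed

lemma prob_mono:
  assumes "0 \<le> p" "p \<le> 1" "\<And>E. E \<subseteq> bip_edges n1 n2 \<Longrightarrow> P E \<Longrightarrow> Q E"
  shows "bip_prob n1 n2 p P \<le> bip_prob n1 n2 p Q"
  unfolding bip_prob_bexp using assms by (intro bexp_mono) auto

theorem corollary4p10:
  fixes n1 n2 :: "nat \<Rightarrow> nat" and p :: "nat \<Rightarrow> real" and lam :: real
  assumes lam_bounds: "0 < lam" "lam \<le> 1"
    and n1_inf: "filterlim n1 at_top sequentially"
    and ratio: "\<And>k. real (n1 k) = lam * real (n2 k)"
    and p_range: "\<And>k. 0 \<le> p k \<and> p k \<le> 1"
    and p_lower: "filterlim (\<lambda>k. p k * sqrt (real (n1 k * n2 k))) at_top sequentially"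
    and p_upper: "\<exists>\<epsilon> :: nat \<Rightarrow> real. \<epsilon> \<longlonglongrightarrow> 0 \<and>
        (\<lambda>k. p k / (real (n1 k * n2 k)) powr (- 1 / 2 + \<epsilon> k)) \<longlonglongrightarrow> 0"
  shows "\<exists>g :: nat \<Rightarrow> real.
           (\<lambda>k. g k / (p k * real (n1 k) * real (n2 k))) \<longlonglongrightarrow> 0
         \<and> (\<lambda>k. bip_prob (n1 k) (n2 k) (p k)
                 (\<lambda>E. real (num_faces_min_genus E) \<le> g k)) \<longlonglongrightarrow> 1"
proof -
  obtain \<epsilon> :: "nat \<Rightarrow> real" where eps: "\<epsilon> \<longlonglongrightarrow> 0"
    and pu: "(\<lambda>k. p k / (real (n1 k * n2 k)) powr (- 1 / 2 + \<epsilon> k)) \<longlonglongrightarrow> 0"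
    using p_upper by blast
  define N where "N k = real (n1 k * n2 k)" for k
  define q where "q k = p k * sqrt (N k)" for k
  define s where "s k = real (n1 k + n2 k)" for k
  define c where "c = (1 + lam) / sqrt lam"
  have p0: "0 \<le> p k" "p k \<le> 1" for k using p_range by auto
  have sl: "0 < sqrt lam" using lam_bounds by simp
  have n12: "n1 k \<le> n2 k" for k
  proof -
    have "lam * real (n2 k) \<le> 1 * real (n2 k)" using lam_bounds by (intro mult_right_mono) auto
    then have "real (n1 k) \<le> real (n2 k)" using ratio[of k] by simp
    then show ?thesis by simp
  qed
  have n1top: "filterlim (\<lambda>k. real (n1 k)) at_top sequentially"
    by (rule filterlim_compose[OF filterlim_real_sequentially n1_inf])
  have ev_n1: "eventually (\<lambda>k. 1 \<le> n1 k) sequentially"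
    using n1_inf by (simp add: filterlim_at_top)
  have qtop: "filterlim q at_top sequentially" using p_lower unfolding q_def N_def .
  have ev_q: "eventually (\<lambda>k. 0 < q k) sequentially"
    using qtop by (simp add: filterlim_at_top_dense)
  have N_eq: "N k = lam * real (n2 k) ^ 2" for k
    unfolding N_def using ratio[of k] by (simp add: power2_eq_square)
  have sqN: "sqrt (N k) = sqrt lam * real (n2 k)" for k
    unfolding N_eq by (simp add: real_sqrt_mult)
  have s_eq: "s k = c * sqrt (N k)" for k
  proof -
    have "c * sqrt (N k) = (1 + lam) * real (n2 k)" unfolding sqN c_def using sl by (simp add: field_simps)
    also have "\<dots> = s k" unfolding s_def using ratio[of k] by (simp add: algebra_simps)
    finally show ?thesis by simp
  qed
  have pn1: "p k * real (n1 k) = sqrt lam * q k" for k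
  proof -
    have "p k * real (n1 k) = p k * (sqrt lam * sqrt lam) * real (n2 k)"
      using ratio[of k] lam_bounds by simp
    also have "\<dots> = sqrt lam * q k" unfolding q_def sqN by (simp add: algebra_simps)
    finally show ?thesis .
  qed
  have pn1top: "filterlim (\<lambda>k. p k * real (n1 k)) at_top sequentially"
    unfolding pn1 by (rule filterlim_tendsto_pos_mult_at_top[OF tendsto_const sl qtop])
  have Ntop: "filterlim N at_top sequentially"
  proof (rule filterlim_at_top_mono[OF n1top])
    show "\<forall>\<^sub>F k in sequentially. real (n1 k) \<le> N k"
      using ev_n1
    proof (rule eventually_mono)
      fix k assume "1 \<le> n1 k"
      then have "1 \<le> n2 k" using n12[of k] by simp
      then have "real (n1 k) * 1 \<le> real (n1 k) * real (n2 k)" by (intro mult_left_mono) auto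
      then show "real (n1 k) \<le> N k" unfolding N_def by simp
    qed
  qed
  have ev_N: "eventually (\<lambda>k. 1 \<le> N k) sequentially" using Ntop by (simp add: filterlim_at_top)
  have Q: "eventually (\<lambda>k. q k \<le> N k powr \<delta>) sequentially" if d: "\<delta> > 0" for \<delta>
  proof -
    have e1: "eventually (\<lambda>k. \<epsilon> k < \<delta>) sequentially" using order_tendstoD(2)[OF eps d] .
    have e2: "eventually (\<lambda>k. p k / N k powr (- 1 / 2 + \<epsilon> k) < 1) sequentially"
      using order_tendstoD(2)[OF pu, of 1] unfolding N_def by simp
    show ?thesis using e1 e2 ev_N
    proof eventually_elim
      case (elim k)
      have Npos: "0 < N k" using elim by simp
      have pp: "0 < N k powr (- 1 / 2 + \<epsilon> k)" using Npos by simp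
      have "p k \<le> N k powr (- 1 / 2 + \<epsilon> k)" using elim(2) pp by (simp add: divide_less_eq)
      also have "\<dots> \<le> N k powr (- 1 / 2 + \<delta>)" using elim by (intro powr_mono) auto
      finally have a: "p k \<le> N k powr (- 1 / 2 + \<delta>)" .
      have "q k = p k * N k powr (1/2)" unfolding q_def using Npos by (simp add: powr_half_sqrt)
      also have "\<dots> \<le> N k powr (- 1 / 2 + \<delta>) * N k powr (1/2)"
        using a by (intro mult_right_mono) auto
      also have "\<dots> = N k powr (- 1 / 2 + \<delta> + 1/2)" by (rule powr_add[symmetric])
      also have "\<dots> = N k powr \<delta>" by simp
      finally show ?case .
    qed
  qed
  define T where "T m k = (s k * p k) ^ m / (p k * N k)" for m k
  have Tlim: "(\<lambda>k. T m k) \<longlonglongrightarrow> 0" if m1: "1 \<le> m" for m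
  proof -
    have lim0: "(\<lambda>k. q k ^ (m - 1) / sqrt (N k)) \<longlonglongrightarrow> 0"
      by (rule power_ratio_to0[OF Ntop Q]) (use ev_q in \<open>auto elim: eventually_mono\<close>)
    have lim1: "(\<lambda>k. c ^ m * (q k ^ (m - 1) / sqrt (N k))) \<longlonglongrightarrow> c ^ m * 0"
      by (rule tendsto_mult[OF tendsto_const lim0])
    have "eventually (\<lambda>k. c ^ m * (q k ^ (m - 1) / sqrt (N k)) = T m k) sequentially"
      using ev_q ev_N
    proof eventually_elim
      case (elim k)
      have Npos: "0 < N k" using elim by simp
      have sNpos: "0 < sqrt (N k)" using Npos by simp
      have sp: "s k * p k = c * q k" unfolding s_eq q_def by simp
      have pN: "p k * N k = q k * sqrt (N k)"
        unfolding q_def using Npos by (simp add: mult.assoc real_sqrt_mult_self)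
      have qm: "q k ^ m = q k * q k ^ (m - 1)" using m1 by (metis power_eq_if not_one_le_zero)
      have "T m k = (c * q k) ^ m / (q k * sqrt (N k))" unfolding T_def sp pN ..
      also have "\<dots> = c ^ m * (q k * q k ^ (m - 1)) / (q k * sqrt (N k))"
        by (simp add: power_mult_distrib qm)
      also have "\<dots> = c ^ m * (q k ^ (m - 1) / sqrt (N k))"
        using elim(1) sNpos by (simp add: field_simps)
      finally show ?case by simp
    qed
    from tendsto_cong[OF this] lim1 show ?thesis by simp
  qed
  define F where "F L k = (1 - p k) ^ (n2 k - 1) + (1 - p k) ^ (n1 k - 1)
      + (\<Sum>m\<in>{3..L}. (s k * p k) ^ m) / (p k * N k) + 2 / real L" for L k
  have Fnn: "0 \<le> F L k" for L k
  proof -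
    have "0 \<le> (\<Sum>m\<in>{3..L}. (s k * p k) ^ m)" using p0[of k] unfolding s_def by (intro sum_nonneg) auto
    moreover have "0 \<le> p k * N k" using p0[of k] unfolding N_def by simp
    ultimately show ?thesis unfolding F_def using p0[of k] by (intro add_nonneg_nonneg) auto
  qed
  have Fev: "eventually (\<lambda>k. F L k \<le> 3 / real L) sequentially" if L3: "3 \<le> L" for L
  proof -
    have l1: "(\<lambda>k. (1 - p k) ^ (n2 k - 1)) \<longlonglongrightarrow> 0"
      by (rule leaf_term_to0[OF p_range n12 pn1top])
    have l2: "(\<lambda>k. (1 - p k) ^ (n1 k - 1)) \<longlonglongrightarrow> 0"
      by (rule leaf_term_to0[OF p_range order_refl pn1top])
    have l3: "(\<lambda>k. (\<Sum>m\<in>{3..L}. T m k)) \<longlonglongrightarrow> (\<Sum>m\<in>{3..L}. 0)"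
      by (rule tendsto_sum) (rule Tlim, simp)
    have l3': "(\<lambda>k. (\<Sum>m\<in>{3..L}. (s k * p k) ^ m) / (p k * N k)) \<longlonglongrightarrow> 0"
      using l3 unfolding T_def by (simp add: sum_divide_distrib)
    have "(\<lambda>k. F L k) \<longlonglongrightarrow> 0 + 0 + 0 + 2 / real L"
      unfolding F_def by (intro tendsto_add l1 l2 l3' tendsto_const)
    moreover have "0 + 0 + 0 + 2 / real L < 3 / real L" using L3 by (simp add: divide_strict_right_mono)
    ultimately have "eventually (\<lambda>k. F L k < 3 / real L) sequentially" by (rule order_tendstoD(2))
    then show ?thesis by (rule eventually_mono) simp
  qed
  obtain Lk where Lk3: "\<And>k. 3 \<le> Lk k" and FL0: "(\<lambda>k. F (Lk k) k) \<longlonglongrightarrow> 0"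
    using diagonal[of F, OF Fnn Fev] by blast
  define g where "g k = p k * real (n1 k) * real (n2 k) * sqrt (F (Lk k) k)" for k
  have sq0: "(\<lambda>k. sqrt (F (Lk k) k)) \<longlonglongrightarrow> 0"
    using tendsto_real_sqrt[OF FL0] by simp
  have ev_pos: "eventually (\<lambda>k. 0 < p k * real (n1 k) * real (n2 k)) sequentially"
    using ev_q ev_n1
  proof eventually_elim
    case (elim k)
    have "1 \<le> n2 k" using elim n12[of k] by simp
    moreover have "0 < p k" using elim(1) unfolding q_def
      by (metis p0(1) mult_eq_0_iff order_less_le)
    ultimately show ?case using elim by simp
  qed
  have c1: "(\<lambda>k. g k / (p k * real (n1 k) * real (n2 k))) \<longlonglongrightarrow> 0"
  proof -
    have "eventually (\<lambda>k. sqrt (F (Lk k) k) = g k / (p k * real (n1 k) * real (n2 k))) sequentially"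
      using ev_pos
    proof eventually_elim
      case (elim k)
      then have "p k * real (n1 k) * real (n2 k) \<noteq> 0" by (metis order_less_irrefl)
      then show ?case unfolding g_def by (rule nonzero_mult_div_cancel_left[symmetric])
    qed
    from tendsto_cong[OF this] sq0 show ?thesis by simp
  qed
  have c2: "(\<lambda>k. bip_prob (n1 k) (n2 k) (p k) (\<lambda>E. real (num_faces_min_genus E) \<le> g k)) \<longlonglongrightarrow> 1"
  proof (rule tendsto_sandwich[where f="\<lambda>k. 1 - sqrt (F (Lk k) k)" and h="\<lambda>k. 1"])
    show "\<forall>\<^sub>F k in sequentially. bip_prob (n1 k) (n2 k) (p k) (\<lambda>E. real (num_faces_min_genus E) \<le> g k) \<le> 1"
      using p0 by (intro always_eventually allI prob_le1) auto
    show "(\<lambda>k. 1) \<longlonglongrightarrow> (1::real)" by simp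
    show "(\<lambda>k. 1 - sqrt (F (Lk k) k)) \<longlonglongrightarrow> 1"
      using tendsto_diff[OF tendsto_const sq0, of 1] by simp
    show "\<forall>\<^sub>F k in sequentially. 1 - sqrt (F (Lk k) k) \<le> bip_prob (n1 k) (n2 k) (p k) (\<lambda>E. real (num_faces_min_genus E) \<le> g k)"
      using ev_pos
    proof eventually_elim
      case (elim k)
      define M where "M = p k * real (n1 k) * real (n2 k)"
      define L where "L = Lk k"
      define Fk where "Fk = F L k"
      have M0: "0 < M" using elim M_def by simp
      have L3: "3 \<le> L" unfolding L_def by (rule Lk3)
      have Fk0: "0 < Fk"
      proof -
        have "0 \<le> (\<Sum>m\<in>{3..L}. (s k * p k) ^ m)" using p0[of k] unfolding s_def by (intro sum_nonneg) auto
        moreover have "0 \<le> p k * N k" using p0[of k] unfolding N_def by simp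
        moreover have "0 < 2 / real L" using L3 by simp
        ultimately show ?thesis unfolding Fk_def F_def using p0[of k] by (intro add_nonneg_pos add_nonneg_nonneg) auto
      qed
      have gk: "g k = M * sqrt Fk" unfolding g_def M_def Fk_def L_def by simp
      have gpos: "0 < g k" using gk M0 Fk0 by simp
      have MN: "p k * N k = M" unfolding M_def N_def by simp
      have expY: "bexp (n1 k) (n2 k) (p k) (Yv (n1 k) (n2 k) L) \<le> M * Fk"
      proof -
        have "bexp (n1 k) (n2 k) (p k) (Yv (n1 k) (n2 k) L)
           \<le> real (n1 k * n2 k) * (p k * (1 - p k) ^ (n2 k - 1)) + real (n1 k * n2 k) * (p k * (1 - p k) ^ (n1 k - 1))
            + (\<Sum>m\<in>{3..L}. (real (n1 k + n2 k) * p k) ^ m) + 2 * (real (n1 k * n2 k) * p k) / real L"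
          using p0[of k] L3 by (intro exp_Y) auto
        also have "\<dots> = M * Fk"
        proof -
          define X where "X = real (n1 k * n2 k)"
          define A where "A = (1 - p k) ^ (n2 k - 1)"
          define B where "B = (1 - p k) ^ (n1 k - 1)"
          define S where "S = (\<Sum>m\<in>{3..L}. (real (n1 k + n2 k) * p k) ^ m)"
          have MX: "M = p k * X" unfolding M_def X_def by simp
          have pX: "p k * X \<noteq> 0" using M0 unfolding MX by (metis order_less_irrefl)
          have Lp: "real L \<noteq> 0" using L3 by simp
          have "Fk = A + B + S / (p k * X) + 2 / real L"
            unfolding Fk_def F_def A_def B_def S_def X_def N_def s_def ..
          then have "M * Fk = p k * X * A + p k * X * B + S + 2 * (X * p k) / real L"
            unfolding MX using pX Lp by (simp add: field_simps)
          then show ?thesis unfolding X_def A_def B_def S_def by (simp add: algebra_simps)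
        qed
        finally show ?thesis .
      qed
      have mark: "bip_prob (n1 k) (n2 k) (p k) (\<lambda>E. g k \<le> Yv (n1 k) (n2 k) L E) \<le> sqrt Fk"
      proof -
        have "bip_prob (n1 k) (n2 k) (p k) (\<lambda>E. g k \<le> Yv (n1 k) (n2 k) L E)
            \<le> bexp (n1 k) (n2 k) (p k) (Yv (n1 k) (n2 k) L) / g k"
          using p0[of k] gpos by (intro markov Yv_nonneg) auto
        also have "\<dots> \<le> M * Fk / g k" using expY gpos by (intro divide_right_mono) auto
        also have "\<dots> = Fk / sqrt Fk" unfolding gk using M0 by simp
        also have "\<dots> = sqrt Fk" using Fk0 by (simp add: real_div_sqrt)
        finally show ?thesis .
      qed
      have mono: "bip_prob (n1 k) (n2 k) (p k) (\<lambda>E. \<not> real (num_faces_min_genus E) \<le> g k)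
          \<le> bip_prob (n1 k) (n2 k) (p k) (\<lambda>E. g k \<le> Yv (n1 k) (n2 k) L E)"
      proof (rule prob_mono)
        fix E assume EB: "E \<subseteq> bip_edges (n1 k) (n2 k)" and nf: "\<not> real (num_faces_min_genus E) \<le> g k"
        have "real (num_faces_min_genus E) \<le> Yv (n1 k) (n2 k) L E"
          unfolding Yv_def using num_faces_bound[OF EB, of L] L3 by simp
        then show "g k \<le> Yv (n1 k) (n2 k) L E" using nf by simp
      qed (use p0 in auto)
      have "bip_prob (n1 k) (n2 k) (p k) (\<lambda>E. real (num_faces_min_genus E) \<le> g k)
          = 1 - bip_prob (n1 k) (n2 k) (p k) (\<lambda>E. \<not> real (num_faces_min_genus E) \<le> g k)"
        by (rule prob_compl)
      then show ?case using mono mark unfolding Fk_def L_def by simp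
    qed
  qed
  show ?thesis using c1 c2 by blast
qed

end
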